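(* Let $A_1,\dots,A_m,B_1,\dots,B_m$ be quadratic forms on $\mathbb{R}^n$ with $0\preceq A_i\preceq I$, $B_i\succeq0$ and $\sum_iB_i(X)=\|X\|^2$ (identified with their symmetric matrices). Let $\{X\}$ be a finitely supported distribution over unit vectors in $\mathbb{R}^n$. Let $\beta_i=\mathbb{E}_XB_i(X)$ and, for $\beta_i>0$, $\rho_i=\mathbb{E}_X[XX^\top B_i(X)]/\beta_i$ (for $\beta_i=0$, $\rho_i$ is an arbitrary density matrix). Suppose $\sum_i\beta_iH(\rho_i)\ge H\!\left(\sum_i\beta_i\rho_i\right)-\epsilon^2$. Then $$\sum_i\mathbb{E}_XA_i(X)\cdot\mathbb{E}_XB_i(X)\ \ge\ \sum_i\mathbb{E}_X[A_i(X)B_i(X)]-\epsilon.$$ The same holds if $\{X\}$ is replaced by a level-$4$ pseudoexpectation $\tilde{\mathbb{E}}$ satisfying $\tilde{\mathbb{E}}[(\|X\|^2-1)Q]=0$ for all $Q$ of degree at most $2$.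
   Context: $H(\rho)=-\mathrm{Tr}\,\rho\log\rho$ is the von Neumann entropy (natural logarithm) of a density matrix (PSD, trace one). A level-$4$ pseudoexpectation is a linear functional on polynomials of degree at most $4$ with $\tilde{\mathbb{E}}1=1$ and $\tilde{\mathbb{E}}Q^2\ge0$ for $\deg Q\le2$. *)

theory Defs
  imports "HOL-Analysis.Analysis" "HOL-Probability.Probability"
begin

definition qf :: "real^'n^'n \<Rightarrow> real^'n \<Rightarrow> real" where
  "qf A x = x \<bullet> (A *v x)"

definition symmetric_mat :: "real^'n^'n \<Rightarrow> bool" where
  "symmetric_mat A \<longleftrightarrow> transpose A = A"

definition psd :: "real^'n^'n \<Rightarrow> bool" where
  "psd A \<longleftrightarrow> symmetric_mat A \<and> (\<forall>x. 0 \<le> qf A x)"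

definition below_id :: "real^'n^'n \<Rightarrow> bool" where
  "below_id A \<longleftrightarrow> psd (mat 1 - A)"

definition density_matrix :: "real^'n^'n \<Rightarrow> bool" where
  "density_matrix \<rho> \<longleftrightarrow> psd \<rho> \<and> trace \<rho> = 1"

definition diag_mat :: "real^'n \<Rightarrow> real^'n^'n" where
  "diag_mat d = (\<chi> i j. if i = j then d $ i else 0)"

definition mat_fun :: "(real \<Rightarrow> real) \<Rightarrow> real^'n^'n \<Rightarrow> real^'n^'n" where
  "mat_fun f M = (THE N. \<exists>U d. orthogonal_matrix U \<and> M = U ** diag_mat d ** transpose U
                          \<and> N = U ** diag_mat (\<chi> k. f (d $ k)) ** transpose U)"

text \<open>von Neumann entropy with natural logarithm, H(rho) = - Tr rho log rho
  (with the convention 0 log 0 = 0, automatic since ln 0 = 0 in Isabelle).\<close>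
definition vn_entropy :: "real^'n^'n \<Rightarrow> real" where
  "vn_entropy \<rho> = - trace (\<rho> ** mat_fun ln \<rho>)"

definition outer :: "real^'n \<Rightarrow> real^'n^'n" where
  "outer x = (\<chi> i j. x $ i * x $ j)"

definition monomial_fun :: "('n::finite \<Rightarrow> nat) \<Rightarrow> real^'n \<Rightarrow> real" where
  "monomial_fun a x = (\<Prod>k\<in>UNIV. (x $ k) ^ a k)"

definition poly_fun :: "nat \<Rightarrow> (real^'n::finite \<Rightarrow> real) \<Rightarrow> bool" where
  "poly_fun d f \<longleftrightarrow> (\<exists>c :: ('n \<Rightarrow> nat) \<Rightarrow> real.
      f = (\<lambda>x. \<Sum>a\<in>{a. sum a UNIV \<le> d}. c a * monomial_fun a x))"

definition pseudo_exp4 :: "((real^'n::finite \<Rightarrow> real) \<Rightarrow> real) \<Rightarrow> bool" where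
  "pseudo_exp4 E \<longleftrightarrow>
     (\<forall>f g. poly_fun 4 f \<longrightarrow> poly_fun 4 g \<longrightarrow> E (\<lambda>x. f x + g x) = E f + E g) \<and>
     (\<forall>f c. poly_fun 4 f \<longrightarrow> E (\<lambda>x. c * f x) = c * E f) \<and>
     E (\<lambda>x. 1) = 1 \<and>
     (\<forall>Q. poly_fun 2 Q \<longrightarrow> 0 \<le> E (\<lambda>x. (Q x)^2))"

end

theory Submission
  imports Defs
begin

lemma sym_entry: "transpose M = M \<Longrightarrow> (M::real^'n^'n) $ i $ j = M $ j $ i"
  by (metis transpose_def vec_lambda_beta)

lemma sym_inner:
  fixes M :: "real^'n^'n"
  assumes "transpose M = M"
  shows "(M *v x) \<bullet> y = x \<bullet> (M *v y)"
proof -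
  have "(M *v x) \<bullet> y = (\<Sum>i\<in>UNIV. (\<Sum>j\<in>UNIV. M$i$j * x$j) * y$i)"
    by (simp add: inner_vec_def matrix_vector_mult_def)
  also have "\<dots> = (\<Sum>i\<in>UNIV. \<Sum>j\<in>UNIV. M$i$j * x$j * y$i)" by (simp add: sum_distrib_right)
  also have "\<dots> = (\<Sum>j\<in>UNIV. \<Sum>i\<in>UNIV. M$i$j * x$j * y$i)" by (rule sum.swap)
  also have "\<dots> = (\<Sum>j\<in>UNIV. x$j * (\<Sum>i\<in>UNIV. M$j$i * y$i))"
  proof (rule sum.cong[OF refl])
    fix j show "(\<Sum>i\<in>UNIV. M$i$j * x$j * y$i) = x$j * (\<Sum>i\<in>UNIV. M$j$i * y$i)"
      unfolding sum_distrib_left by (rule sum.cong[OF refl]) (simp add: sym_entry[OF assms, of _ j])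
  qed
  also have "\<dots> = x \<bullet> (M *v y)" by (simp add: inner_vec_def matrix_vector_mult_def mult.commute)
  finally show ?thesis .
qed

lemma qf_scale: "qf M (c *\<^sub>R x) = c^2 * qf M x"
  by (simp add: qf_def power2_eq_square matrix_vector_mult_scaleR)

lemma quad_zero:
  fixes c K :: real
  assumes "\<And>t. 2*t*c + t^2 * K \<le> 0"
  shows "c = 0"
proof -
  define s where "s = 1 / (\<bar>K\<bar> + 1)"
  have s: "s > 0" "s * \<bar>K\<bar> < 1" unfolding s_def by (auto simp: field_simps)
  have "2*(s*c)*c + (s*c)^2*K \<le> 0" using assms .
  hence "c^2 * (s * (2 + s*K)) \<le> 0" by (simp add: power2_eq_square algebra_simps)
  moreover have "-\<bar>K\<bar> \<le> K" by linarith
  hence "s * (-\<bar>K\<bar>) \<le> s * K" using s(1) by (rule mult_left_mono[OF _ less_imp_le])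
  hence "s * (2 + s*K) > 0" using s by (simp add: mult_pos_pos)
  ultimately show ?thesis by (metis mult_pos_pos not_le zero_less_power2)
qed

lemma qf_le_sup:
  fixes M :: "real^'n^'n"
  assumes "subspace S" "v \<in> S" "norm v = 1" "\<forall>y\<in>S \<inter> sphere 0 1. qf M y \<le> qf M v" "y \<in> S"
  shows "qf M y \<le> qf M v * (norm y)^2"
proof (cases "y = 0")
  case True thus ?thesis by (simp add: qf_def)
next
  case False
  define z where "z = (1 / norm y) *\<^sub>R y"
  have "z \<in> S" unfolding z_def using assms(1,5) subspace_scale by blast
  moreover have "norm z = 1" using False by (simp add: z_def)
  ultimately have "qf M z \<le> qf M v" using assms(4) by simp
  moreover have "y = norm y *\<^sub>R z" using False by (simp add: z_def)
  hence "qf M y = (norm y)^2 * qf M z" by (metis qf_scale)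
  ultimately show ?thesis by (metis mult.commute mult_right_mono zero_le_power2)
qed

lemma qf_expand:
  fixes M :: "real^'n^'n"
  assumes "transpose M = M"
  shows "qf M (v + t *\<^sub>R w) = qf M v + 2*t*((M *v v) \<bullet> w) + t^2 * qf M w"
proof -
  have "qf M (v + t *\<^sub>R w) = v \<bullet> (M *v v) + t * (v \<bullet> (M *v w)) + t * (w \<bullet> (M *v v)) + t^2 * (w \<bullet> (M *v w))"
    by (simp add: qf_def matrix_vector_right_distrib matrix_vector_mult_scaleR inner_add_left inner_add_right power2_eq_square algebra_simps)
  moreover have "v \<bullet> (M *v w) = (M *v v) \<bullet> w" using sym_inner[OF assms] by simp
  moreover have "w \<bullet> (M *v v) = (M *v v) \<bullet> w" by (simp add: inner_commute)
  ultimately show ?thesis by (simp add: qf_def)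
qed

lemma eigen_exists:
  fixes M :: "real^'n^'n"
  assumes sym: "transpose M = M"
  shows "subspace S \<Longrightarrow> (\<forall>x\<in>S. M *v x \<in> S) \<Longrightarrow> \<exists>B. finite B \<and> B \<subseteq> S \<and> card B = dim S \<and>
     (\<forall>b\<in>B. norm b = 1 \<and> M *v b = qf M b *\<^sub>R b) \<and> (\<forall>a\<in>B. \<forall>b\<in>B. a \<noteq> b \<longrightarrow> a \<bullet> b = 0)"
proof (induction "dim S" arbitrary: S rule: less_induct)
  case less
  show ?case
  proof (cases "dim S = 0")
    case True then show ?thesis by (intro exI[of _ "{}"]) auto
  next
    case False
    hence "\<not> S \<subseteq> {0}" by simp
    then obtain x where x: "x \<in> S" "x \<noteq> 0" by blast
    have "(1 / norm x) *\<^sub>R x \<in> S" by (rule subspace_scale[OF less.prems(1) x(1)])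
    moreover have "norm ((1 / norm x) *\<^sub>R x) = 1" using x(2) by simp
    ultimately have "(1 / norm x) *\<^sub>R x \<in> S \<inter> sphere 0 1" by simp
    hence ne: "S \<inter> sphere 0 1 \<noteq> {}" by blast
    have cpt: "compact (S \<inter> sphere 0 1)"
      using closed_subspace[OF less.prems(1)] compact_sphere by (simp add: closed_Int_compact)
    have "continuous_on (S \<inter> sphere 0 1) (\<lambda>y. y \<bullet> (M *v y))"
      by (intro continuous_on_inner continuous_on_id matrix_vector_mult_linear_continuous_on)
    hence cont: "continuous_on (S \<inter> sphere 0 1) (qf M)" by (simp add: qf_def[abs_def])
    obtain v where v: "v \<in> S \<inter> sphere 0 1" "\<forall>y\<in>S \<inter> sphere 0 1. qf M y \<le> qf M v"
      using continuous_attains_sup[OF cpt ne cont] by blast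
    define lam where "lam = qf M v"
    have nv: "norm v = 1" "v \<in> S" using v(1) by auto
    have vv: "v \<bullet> v = 1" using nv(1) by (simp add: norm_eq_1)
    have bound: "\<And>y. y\<in>S \<Longrightarrow> qf M y \<le> lam * (norm y)^2"
      unfolding lam_def using qf_le_sup[OF less.prems(1) nv(2) nv(1) v(2)] by blast
    have perp: "(M *v v) \<bullet> w = 0" if w: "w \<in> S" "v \<bullet> w = 0" for w
    proof (rule quad_zero[where K = "qf M w - lam * (norm w)^2"])
      fix t :: real
      have "v + t *\<^sub>R w \<in> S" using less.prems(1) nv(2) w(1) subspace_add subspace_scale by blast
      hence "qf M (v + t *\<^sub>R w) \<le> lam * (norm (v + t *\<^sub>R w))^2" by (rule bound)
      moreover have "qf M (v + t *\<^sub>R w) = lam + 2*t*((M *v v) \<bullet> w) + t^2 * qf M w"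
        using qf_expand[OF sym] lam_def by simp
      moreover have "(norm (v + t *\<^sub>R w))^2 = 1 + t^2 * (norm w)^2"
      proof -
        have "(norm (v + t *\<^sub>R w))^2 = (v + t *\<^sub>R w) \<bullet> (v + t *\<^sub>R w)" by (rule power2_norm_eq_inner)
        also have "\<dots> = v \<bullet> v + 2 * t * (v \<bullet> w) + t^2 * (w \<bullet> w)"
          by (simp add: inner_add_left inner_add_right inner_commute power2_eq_square algebra_simps)
        finally show ?thesis using w(2) vv by (simp add: power2_norm_eq_inner)
      qed
      ultimately show "2*t*((M *v v) \<bullet> w) + t^2 * (qf M w - lam*(norm w)^2) \<le> 0"
        by (simp add: algebra_simps)
    qed
    have eig: "M *v v = lam *\<^sub>R v"
    proof -
      define w where "w = M *v v - lam *\<^sub>R v"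
      have wS: "w \<in> S" unfolding w_def using less.prems nv(2) subspace_diff subspace_scale by blast
      have vw: "v \<bullet> w = 0" unfolding w_def lam_def qf_def using vv by (simp add: inner_diff_right)
      hence "(M *v v) \<bullet> w = 0" using perp wS by blast
      hence "w \<bullet> w = 0" using vw by (simp add: w_def inner_diff_left)
      thus ?thesis by (simp add: w_def)
    qed
    define S' where "S' = {y \<in> S. v \<bullet> y = 0}"
    have "S' = S \<inter> {y. orthogonal v y}" unfolding S'_def orthogonal_def by auto
    moreover have "subspace (S \<inter> {y. orthogonal v y})"
      by (rule subspace_inter[OF less.prems(1) subspace_orthogonal_to_vector])
    ultimately have sub': "subspace S'" by simp
    have inv': "\<forall>y\<in>S'. M *v y \<in> S'"
    proof
      fix y assume y: "y \<in> S'"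
      have "v \<bullet> (M *v y) = (M *v v) \<bullet> y" using sym_inner[OF sym] by simp
      also have "\<dots> = 0" using y eig by (simp add: S'_def)
      finally show "M *v y \<in> S'" using y less.prems(2) by (simp add: S'_def)
    qed
    have S'S: "S' \<subseteq> S" unfolding S'_def by auto
    have span_eq: "span (insert v S') = S"
    proof
      show "span (insert v S') \<subseteq> S" using S'S nv(2) less.prems(1) by (intro span_minimal) auto
      show "S \<subseteq> span (insert v S')"
      proof
        fix y assume y: "y \<in> S"
        have "y - (v \<bullet> y) *\<^sub>R v \<in> S'" unfolding S'_def using y nv(2) less.prems(1) vv
          by (auto simp: inner_diff_right intro: subspace_diff subspace_scale)
        hence "y - (v \<bullet> y) *\<^sub>R v \<in> span (insert v S')" by (simp add: span_base)
        moreover have "(v \<bullet> y) *\<^sub>R v \<in> span (insert v S')" by (simp add: span_base span_scale)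
        ultimately have "(y - (v \<bullet> y) *\<^sub>R v) + (v \<bullet> y) *\<^sub>R v \<in> span (insert v S')" by (rule span_add)
        thus "y \<in> span (insert v S')" by simp
      qed
    qed
    have sp: "span S' = S'" by (rule span_eq_iff[THEN iffD2, OF sub'])
    have vnot: "v \<notin> span S'" unfolding sp using vv by (simp add: S'_def)
    have "dim S = dim (span (insert v S'))" by (simp only: span_eq)
    also have "\<dots> = dim (insert v S')" by (rule dim_span)
    also have "\<dots> = dim S' + 1" using dim_insert[of v S'] vnot by simp
    finally have dimS: "dim S = dim S' + 1" .
    obtain B' where B': "finite B'" "B' \<subseteq> S'" "card B' = dim S'"
      "\<forall>b\<in>B'. norm b = 1 \<and> M *v b = qf M b *\<^sub>R b" "\<forall>a\<in>B'. \<forall>b\<in>B'. a \<noteq> b \<longrightarrow> a \<bullet> b = 0"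
    proof -
      have "dim S' < dim S" using dimS by simp
      from less.hyps[OF this sub' inv'] show ?thesis using that by blast
    qed
    have vB': "v \<notin> B'" using B'(2) vv by (auto simp: S'_def)
    show ?thesis
    proof (intro exI[of _ "insert v B'"] conjI)
      show "finite (insert v B')" using B' by simp
      show "insert v B' \<subseteq> S" using B'(2) S'S nv by auto
      show "card (insert v B') = dim S" using B' vB' dimS by simp
      show "\<forall>b\<in>insert v B'. norm b = 1 \<and> M *v b = qf M b *\<^sub>R b" using B'(4) nv eig lam_def by auto
      show "\<forall>a\<in>insert v B'. \<forall>b\<in>insert v B'. a \<noteq> b \<longrightarrow> a \<bullet> b = 0"
        using B'(5) B'(2) by (auto simp: S'_def inner_commute)
    qed
  qed
qed

lemma mult_diag_right: "(P ** diag_mat d) $ i $ k = P $ i $ k * (d $ k :: real)"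
  by (simp add: matrix_matrix_mult_def diag_mat_def if_distrib cong: if_cong)

lemma mult_diag_left: "(diag_mat d ** P) $ i $ k = (d $ i :: real) * P $ i $ k"
proof -
  have "(diag_mat d ** P) $ i $ k = (\<Sum>j\<in>UNIV. (if i = j then d $ i else 0) * P $ j $ k)"
    by (simp add: matrix_matrix_mult_def diag_mat_def)
  also have "\<dots> = (\<Sum>j\<in>UNIV. (if i = j then d $ i * P $ i $ k else 0))"
    by (rule sum.cong) auto
  also have "\<dots> = d $ i * P $ i $ k" by simp
  finally show ?thesis .
qed

lemma spectral:
  fixes M :: "real^'n^'n"
  assumes sym: "transpose M = M"
  shows "\<exists>U d. orthogonal_matrix U \<and> M = U ** diag_mat d ** transpose U"
proof -
  obtain B where B: "finite B" "card B = dim (UNIV :: (real^'n) set)"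
     "\<forall>b\<in>B. norm b = 1 \<and> M *v b = qf M b *\<^sub>R b" "\<forall>a\<in>B. \<forall>b\<in>B. a \<noteq> b \<longrightarrow> a \<bullet> b = 0"
    using eigen_exists[OF sym subspace_UNIV] by auto
  have "card B = card (UNIV :: 'n set)" using B(2) by simp
  then obtain g where g: "bij_betw g (UNIV :: 'n set) B"
    using finite_same_card_bij[of "UNIV :: 'n set" B] B(1) by auto
  have gB: "g k \<in> B" for k using g by (auto simp: bij_betw_def)
  have ginj: "g k = g l \<Longrightarrow> k = l" for k l using g by (auto simp: bij_betw_def inj_on_def)
  define U :: "real^'n^'n" where "U = (\<chi> i k. g k $ i)"
  define d :: "real^'n" where "d = (\<chi> k. qf M (g k))"
  have "transpose U ** U = mat 1"
  proof -
    have "(transpose U ** U) $ k $ l = (if k = l then 1 else 0)" for k l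
    proof -
      have "(transpose U ** U) $ k $ l = g k \<bullet> g l"
        by (simp add: matrix_matrix_mult_def transpose_def U_def inner_vec_def)
      also have "\<dots> = (if k = l then 1 else 0)"
      proof (cases "k = l")
        case True thus ?thesis using B(3) gB by (simp add: norm_eq_1)
      next
        case False hence "g k \<noteq> g l" using ginj by blast
        thus ?thesis using B(4) gB False by simp
      qed
      finally show ?thesis .
    qed
    thus ?thesis by (simp add: vec_eq_iff mat_def)
  qed
  hence orth: "orthogonal_matrix U" by (simp add: orthogonal_matrix)
  have MU: "M ** U = U ** diag_mat d"
  proof -
    have "(M ** U) $ i $ k = (U ** diag_mat d) $ i $ k" for i k
    proof -
      have "(M ** U) $ i $ k = (M *v g k) $ i"
        by (simp add: matrix_matrix_mult_def matrix_vector_mult_def U_def)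
      also have "\<dots> = d $ k * g k $ i" using B(3) gB by (simp add: d_def)
      finally show ?thesis by (simp add: mult_diag_right U_def mult.commute)
    qed
    thus ?thesis by (simp add: vec_eq_iff)
  qed
  have "M = M ** (U ** transpose U)" using orth by (simp add: orthogonal_matrix_def)
  also have "\<dots> = U ** diag_mat d ** transpose U" by (simp add: matrix_mul_assoc MU)
  finally show ?thesis using orth by blast
qed

lemma orth_TU: "orthogonal_matrix U \<Longrightarrow> transpose U ** U = mat 1"
  by (simp add: orthogonal_matrix_def)
lemma orth_UT: "orthogonal_matrix U \<Longrightarrow> U ** transpose U = mat 1"
  by (simp add: orthogonal_matrix_def)

lemma diag_fun_unique:
  fixes U V :: "real^'n^'n"
  assumes U: "orthogonal_matrix U" and V: "orthogonal_matrix V"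
    and eq: "U ** diag_mat d ** transpose U = V ** diag_mat e ** transpose V"
  shows "U ** diag_mat (\<chi> k. f (d$k)) ** transpose U = V ** diag_mat (\<chi> k. f (e$k)) ** transpose V"
proof -
  define W where "W = transpose V ** U"
  have "W ** diag_mat d = transpose V ** (U ** diag_mat d ** transpose U) ** U"
    by (simp add: W_def matrix_mul_assoc[symmetric] orth_TU[OF U])
  also have "\<dots> = transpose V ** (V ** diag_mat e ** transpose V) ** U" by (simp only: eq)
  also have "\<dots> = diag_mat e ** W"
    by (simp add: W_def matrix_mul_assoc orth_TU[OF V])
  finally have WD: "W ** diag_mat d = diag_mat e ** W" .
  have "(W ** diag_mat (\<chi> k. f (d$k))) $ k $ j = (diag_mat (\<chi> k. f (e$k)) ** W) $ k $ j" for k j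
  proof -
    have "W $ k $ j * d $ j = e $ k * W $ k $ j"
      using arg_cong[OF WD, of "\<lambda>Z. Z $ k $ j"] by (simp add: mult_diag_right mult_diag_left)
    hence "W $ k $ j = 0 \<or> d $ j = e $ k" by (simp add: mult.commute)
    thus ?thesis by (auto simp: mult_diag_right mult_diag_left)
  qed
  hence WF: "W ** diag_mat (\<chi> k. f (d$k)) = diag_mat (\<chi> k. f (e$k)) ** W" by (simp add: vec_eq_iff)
  have UVW: "U = V ** W" by (simp add: W_def matrix_mul_assoc orth_UT[OF V])
  have "U ** diag_mat (\<chi> k. f (d$k)) ** transpose U = V ** (W ** diag_mat (\<chi> k. f (d$k))) ** transpose U"
    by (simp add: UVW matrix_mul_assoc)
  also have "\<dots> = V ** diag_mat (\<chi> k. f (e$k)) ** (W ** transpose U)"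
    by (simp add: WF matrix_mul_assoc)
  also have "W ** transpose U = transpose V"
    by (simp add: W_def matrix_mul_assoc[symmetric] orth_UT[OF U])
  finally show ?thesis .
qed

lemma mat_fun_eq:
  assumes "orthogonal_matrix U" "M = U ** diag_mat d ** transpose U"
  shows "mat_fun f M = U ** diag_mat (\<chi> k. f (d$k)) ** transpose U"
  unfolding mat_fun_def
proof (rule the_equality)
  show "\<exists>U' d'. orthogonal_matrix U' \<and> M = U' ** diag_mat d' ** transpose U' \<and>
      U ** diag_mat (\<chi> k. f (d$k)) ** transpose U = U' ** diag_mat (\<chi> k. f (d'$k)) ** transpose U'"
    using assms by blast
  fix N assume "\<exists>U' d'. orthogonal_matrix U' \<and> M = U' ** diag_mat d' ** transpose U' \<and>
      N = U' ** diag_mat (\<chi> k. f (d'$k)) ** transpose U'"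
  then obtain U' d' where "orthogonal_matrix U'" "M = U' ** diag_mat d' ** transpose U'"
      "N = U' ** diag_mat (\<chi> k. f (d'$k)) ** transpose U'" by blast
  thus "N = U ** diag_mat (\<chi> k. f (d$k)) ** transpose U"
    using diag_fun_unique[OF _ assms(1), of U' d' d f] assms(2) by simp
qed

lemma trace_transpose: "trace (transpose (A::real^'n^'n)) = trace A"
  by (simp add: trace_def transpose_def)

lemma trace_diag_prod:
  fixes W :: "real^'n^'n"
  shows "trace (diag_mat a ** W ** diag_mat b ** transpose W) = (\<Sum>j\<in>UNIV. \<Sum>k\<in>UNIV. (W$j$k)^2 * a$j * b$k)"
proof -
  have "trace (diag_mat a ** W ** diag_mat b ** transpose W) = (\<Sum>j\<in>UNIV. \<Sum>k\<in>UNIV. (diag_mat a ** W ** diag_mat b) $ j $ k * W $ j $ k)"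
    by (simp add: trace_def matrix_matrix_mult_def transpose_def)
  also have "\<dots> = (\<Sum>j\<in>UNIV. \<Sum>k\<in>UNIV. (W$j$k)^2 * a$j * b$k)"
    by (simp add: mult_diag_right mult_diag_left power2_eq_square mult_ac)
  finally show ?thesis .
qed

lemma trace_two:
  fixes U V :: "real^'n^'n"
  assumes U: "orthogonal_matrix U" and V: "orthogonal_matrix V"
  shows "trace ((V ** diag_mat a ** transpose V) ** (U ** diag_mat b ** transpose U)) =
     (\<Sum>j\<in>UNIV. \<Sum>k\<in>UNIV. ((transpose V ** U)$j$k)^2 * a$j * b$k)"
proof -
  define W where "W = transpose V ** U"
  have tW: "transpose W = transpose U ** V" by (simp add: W_def matrix_transpose_mul)
  have "trace ((V ** diag_mat a ** transpose V) ** (U ** diag_mat b ** transpose U)) =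
        trace (V ** (diag_mat a ** transpose V ** U ** diag_mat b ** transpose U))"
    by (simp add: matrix_mul_assoc)
  also have "\<dots> = trace ((diag_mat a ** transpose V ** U ** diag_mat b ** transpose U) ** V)"
    by (rule trace_mul_sym)
  also have "\<dots> = trace (diag_mat a ** W ** diag_mat b ** transpose W)"
    by (simp add: W_def matrix_transpose_mul matrix_mul_assoc)
  also have "\<dots> = (\<Sum>j\<in>UNIV. \<Sum>k\<in>UNIV. (W$j$k)^2 * a$j * b$k)" by (rule trace_diag_prod)
  finally show ?thesis by (simp add: W_def)
qed

lemma trace_one_spec:
  fixes V :: "real^'n^'n"
  assumes V: "orthogonal_matrix V"
  shows "trace (V ** diag_mat a ** transpose V) = (\<Sum>j\<in>UNIV. a$j)"
proof -
  have "trace (V ** diag_mat a ** transpose V) = trace (V ** (diag_mat a ** transpose V))" by (simp add: matrix_mul_assoc)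
  also have "\<dots> = trace ((diag_mat a ** transpose V) ** V)" by (rule trace_mul_sym)
  also have "\<dots> = trace (diag_mat a)" by (simp add: matrix_mul_assoc[symmetric] orth_TU[OF V])
  finally show ?thesis by (simp add: trace_def diag_mat_def)
qed

lemma sum_if_mult:
  fixes f :: "'n::finite \<Rightarrow> real"
  shows "(\<Sum>k\<in>UNIV. (if j = k then c else 0) * f k) = c * f j"
proof -
  have "(\<Sum>k\<in>UNIV. (if j = k then c else 0) * f k) = (\<Sum>k\<in>UNIV. (if j = k then c * f j else 0))"
    by (rule sum.cong) auto
  also have "\<dots> = c * f j" by (simp add: sum.delta)
  finally show ?thesis .
qed

lemma diag_mult_vec: "diag_mat a *v z = (\<chi> j. (a$j::real) * z$j)"
  by (simp add: vec_eq_iff matrix_vector_mult_def diag_mat_def sum_if_mult)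

lemma qf_spec:
  fixes V :: "real^'n^'n"
  shows "qf (V ** diag_mat a ** transpose V) x = (\<Sum>j\<in>UNIV. a$j * ((transpose V *v x)$j)^2)"
proof -
  define y where "y = transpose V *v x"
  have "qf (V ** diag_mat a ** transpose V) x = x \<bullet> (V *v (diag_mat a *v y))"
    by (simp add: qf_def y_def matrix_vector_mul_assoc matrix_mul_assoc del: transpose_matrix_vector)
  also have "\<dots> = y \<bullet> (diag_mat a *v y)"
    unfolding y_def by (simp add: dot_lmul_matrix)
  also have "\<dots> = (\<Sum>j\<in>UNIV. a$j * (y$j)^2)"
    by (simp add: diag_mult_vec inner_vec_def power2_eq_square mult_ac)
  finally show ?thesis by (simp add: y_def)
qed

lemma orth_vec: "orthogonal_matrix V \<Longrightarrow> transpose V *v (V *v z) = (z::real^'n)"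
  by (simp add: matrix_vector_mul_assoc orth_TU del: transpose_matrix_vector)

lemma qf_spec_V:
  fixes V :: "real^'n^'n"
  assumes "orthogonal_matrix V"
  shows "qf (V ** diag_mat a ** transpose V) (V *v z) = (\<Sum>j\<in>UNIV. a$j * (z$j)^2)"
  using qf_spec[of V a "V *v z"] orth_vec[OF assms] by simp

lemma eig_nonneg:
  fixes V :: "real^'n^'n"
  assumes "orthogonal_matrix V" "\<forall>x. 0 \<le> qf (V ** diag_mat a ** transpose V) x"
  shows "0 \<le> a $ j"
proof -
  have "qf (V ** diag_mat a ** transpose V) (V *v axis j 1) = (\<Sum>k\<in>UNIV. a$k * ((axis j 1 :: real^'n)$k)^2)"
    by (rule qf_spec_V[OF assms(1)])
  also have "\<dots> = (\<Sum>k\<in>UNIV. if k = j then a $ j else 0)"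
    by (rule sum.cong) (auto simp: axis_def)
  also have "\<dots> = a $ j" by simp
  finally have "qf (V ** diag_mat a ** transpose V) (V *v axis j 1) = a $ j" .
  thus ?thesis using assms(2) by metis
qed

lemma quad_bound:
  fixes A B c :: real
  assumes "\<And>t. 2*t*B \<le> c*A + c*t^2*B" "c \<ge> 0" "B \<ge> 0"
  shows "B \<le> c^2 * A"
proof (cases "c = 0")
  case True
  thus ?thesis using assms(1)[of 1] assms(3) by simp
next
  case False
  hence c: "c > 0" using assms(2) by simp
  have "2*(1/c)*B \<le> c*A + c*(1/c)^2*B" by (rule assms(1))
  hence "2*B/c \<le> c*A + B/c" using c by (simp add: power2_eq_square field_simps)
  hence "B/c \<le> c*A" by simp
  hence "B \<le> c*A*c" using c by (simp add: field_simps)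
  thus ?thesis by (simp add: power2_eq_square mult_ac)
qed

lemma polarization_bound:
  fixes M :: "real^'n^'n"
  assumes sym: "transpose M = M" and c: "c \<ge> 0" and b: "\<And>v. \<bar>qf M v\<bar> \<le> c * (v \<bullet> v)"
  shows "(M *v v) \<bullet> (M *v v) \<le> c^2 * (v \<bullet> v)"
proof (rule quad_bound[OF _ c])
  show "0 \<le> (M *v v) \<bullet> (M *v v)" by simp
  fix t :: real
  define w where "w = M *v v"
  have e1: "qf M (v + t *\<^sub>R w) = qf M v + 2*t*((M *v v) \<bullet> w) + t^2 * qf M w" by (rule qf_expand[OF sym])
  have e2: "qf M (v + (-t) *\<^sub>R w) = qf M v + 2*(-t)*((M *v v) \<bullet> w) + (-t)^2 * qf M w" by (rule qf_expand[OF sym])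
  have n1: "(v + t *\<^sub>R w) \<bullet> (v + t *\<^sub>R w) = v \<bullet> v + 2*t*(v \<bullet> w) + t^2 * (w \<bullet> w)"
    by (simp add: inner_add_left inner_add_right inner_commute power2_eq_square algebra_simps)
  have n2: "(v + (-t) *\<^sub>R w) \<bullet> (v + (-t) *\<^sub>R w) = v \<bullet> v + 2*(-t)*(v \<bullet> w) + t^2 * (w \<bullet> w)"
    by (simp add: inner_add_left inner_add_right inner_commute power2_eq_square algebra_simps)
  have "qf M (v + t *\<^sub>R w) \<le> c * ((v + t *\<^sub>R w) \<bullet> (v + t *\<^sub>R w))" using b abs_le_D1 by blast
  moreover have "- qf M (v + (-t) *\<^sub>R w) \<le> c * ((v + (-t) *\<^sub>R w) \<bullet> (v + (-t) *\<^sub>R w))" using b abs_le_D2 by blast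
  ultimately have "4*t*((M *v v) \<bullet> w) \<le> c * (2 * (v \<bullet> v) + 2 * t^2 * (w \<bullet> w))"
    unfolding e1 e2 n1 n2 by (simp add: algebra_simps)
  thus "2*t*((M *v v) \<bullet> (M *v v)) \<le> c * (v \<bullet> v) + c * t^2 * ((M *v v) \<bullet> (M *v v))"
    by (simp add: w_def algebra_simps)
qed

lemma trace_inner: "trace ((P::real^'n^'n) ** Q) = P \<bullet> transpose Q"
  by (simp add: trace_def matrix_matrix_mult_def inner_vec_def transpose_def)

lemma trace_mult3_rev:
  fixes M X Y :: "real^'n^'n"
  assumes "transpose M = M" "transpose X = X" "transpose Y = Y"
  shows "trace (M ** (X ** Y)) = trace (M ** (Y ** X))"
proof -
  have "trace (M ** (X ** Y)) = trace (transpose (M ** (X ** Y)))" by (simp add: trace_transpose)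
  also have "\<dots> = trace (Y ** X ** M)" using assms by (simp add: matrix_transpose_mul matrix_mul_assoc)
  also have "\<dots> = trace (M ** (Y ** X))" by (rule trace_mul_sym)
  finally show ?thesis .
qed

lemma frob_bound:
  fixes M X Y :: "real^'n^'n"
  assumes sM: "transpose M = M" and sX: "transpose X = X" and sY: "transpose Y = Y"
    and b: "\<And>v. (M *v v) \<bullet> (M *v v) \<le> c * (v \<bullet> v)"
  shows "(trace (M ** (X ** Y)))^2 \<le> c * (X \<bullet> X) * (Y \<bullet> Y)"
proof -
  have "trace (M ** (X ** Y)) = trace (transpose (M ** (X ** Y)))" by (simp add: trace_transpose)
  also have "\<dots> = trace (Y ** (X ** M))" using sM sX sY by (simp add: matrix_transpose_mul matrix_mul_assoc)
  also have "\<dots> = trace ((X ** M) ** Y)" by (rule trace_mul_sym)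
  also have "\<dots> = (X ** M) \<bullet> Y" using sY by (simp add: trace_inner)
  finally have t: "trace (M ** (X ** Y)) = (X ** M) \<bullet> Y" .
  have rows: "(X ** M) $ a = M *v (X $ a)" for a
    using sym_entry[OF sM] by (simp add: vec_eq_iff matrix_matrix_mult_def matrix_vector_mult_def mult.commute)
  have "(X ** M) \<bullet> (X ** M) = (\<Sum>a\<in>UNIV. (M *v (X $ a)) \<bullet> (M *v (X $ a)))"
    by (simp add: inner_vec_def[of "X ** M"] rows)
  also have "\<dots> \<le> (\<Sum>a\<in>UNIV. c * ((X $ a) \<bullet> (X $ a)))" by (rule sum_mono) (rule b)
  also have "\<dots> = c * (X \<bullet> X)" by (simp add: inner_vec_def[of X] sum_distrib_left)
  finally have xm: "(X ** M) \<bullet> (X ** M) \<le> c * (X \<bullet> X)" .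
  have "(trace (M ** (X ** Y)))^2 \<le> ((X ** M) \<bullet> (X ** M)) * (Y \<bullet> Y)"
    unfolding t by (rule Cauchy_Schwarz_ineq)
  also have "\<dots> \<le> c * (X \<bullet> X) * (Y \<bullet> Y)" using xm by (simp add: mult_right_mono)
  finally show ?thesis .
qed

lemma mm_add_l: "((A::real^'n^'n) + B) ** C = A ** C + B ** C"
  by (simp add: vec_eq_iff matrix_matrix_mult_def sum.distrib algebra_simps)
lemma mm_diff_l: "((A::real^'n^'n) - B) ** C = A ** C - B ** C"
  by (simp add: vec_eq_iff matrix_matrix_mult_def sum_subtractf algebra_simps)
lemma mm_add_r: "(A::real^'n^'n) ** (B + C) = A ** B + A ** C"
  by (simp add: vec_eq_iff matrix_matrix_mult_def sum.distrib algebra_simps)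
lemma mm_diff_r: "(A::real^'n^'n) ** (B - C) = A ** B - A ** C"
  by (simp add: vec_eq_iff matrix_matrix_mult_def sum_subtractf algebra_simps)
lemma mm_scale_l: "(c *\<^sub>R (A::real^'n^'n)) ** B = c *\<^sub>R (A ** B)"
  by (simp add: vec_eq_iff matrix_matrix_mult_def sum_distrib_left algebra_simps)
lemma mm_scale_r: "(A::real^'n^'n) ** (c *\<^sub>R B) = c *\<^sub>R (A ** B)"
  by (simp add: vec_eq_iff matrix_matrix_mult_def sum_distrib_left algebra_simps)
lemma tr_add: "transpose ((A::real^'n^'n) + B) = transpose A + transpose B"
  by (simp add: vec_eq_iff transpose_def)
lemma tr_diff: "transpose ((A::real^'n^'n) - B) = transpose A - transpose B"
  by (simp add: vec_eq_iff transpose_def)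
lemma trace_scaleR: "trace (c *\<^sub>R (A::real^'n^'n)) = c * trace A"
  by (simp add: trace_def sum_distrib_left)
lemma trace_mat1_mult: "trace (mat 1 ** (A::real^'n^'n)) = trace A"
  by simp
lemma diag_transpose: "transpose (diag_mat d) = (diag_mat d :: real^'n^'n)"
  by (simp add: vec_eq_iff transpose_def diag_mat_def)
lemma diag_mult: "diag_mat a ** diag_mat b = (diag_mat (\<chi> k. a$k * b$k) :: real^'n^'n)"
  by (simp add: vec_eq_iff mult_diag_right) (simp add: diag_mat_def)
lemma spec_transpose: "transpose (V ** diag_mat d ** transpose V) = (V ** diag_mat d ** transpose V :: real^'n^'n)"
  by (simp add: matrix_transpose_mul diag_transpose matrix_mul_assoc)
lemma spec_mult:
  assumes "orthogonal_matrix V"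
  shows "(V ** diag_mat a ** transpose V) ** (V ** diag_mat b ** transpose V) = V ** diag_mat (\<chi> k. a$k * b$k) ** transpose (V :: real^'n^'n)"
proof -
  have "(V ** diag_mat a ** transpose V) ** (V ** diag_mat b ** transpose V) = V ** diag_mat a ** (transpose V ** V) ** diag_mat b ** transpose V"
    by (simp add: matrix_mul_assoc)
  also have "\<dots> = V ** (diag_mat a ** diag_mat b) ** transpose V"
    by (simp add: orth_TU[OF assms] matrix_mul_assoc)
  finally show ?thesis by (simp add: diag_mult)
qed

lemma qf_add: "qf ((A::real^'n^'n) + B) u = qf A u + qf B u"
  by (simp add: qf_def matrix_vector_mult_add_rdistrib inner_add_right)
lemma qf_diff: "qf ((A::real^'n^'n) - B) u = qf A u - qf B u"
  by (simp add: qf_def matrix_vector_mult_diff_rdistrib inner_diff_right)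
lemma qf_scaleM: "qf (c *\<^sub>R (A::real^'n^'n)) u = c * qf A u"
  by (simp add: qf_def scaleR_matrix_vector_assoc[symmetric])
lemma qf_mat1: "qf (mat 1 :: real^'n^'n) u = u \<bullet> u"
  by (simp add: qf_def)
lemma qf_zero: "qf (0::real^'n^'n) u = 0" by (simp add: qf_def)
lemma qf_sum: "finite I \<Longrightarrow> qf (\<Sum>i\<in>I. c i *\<^sub>R (P i :: real^'n^'n)) u = (\<Sum>i\<in>I. c i * qf (P i) u)"
  by (induction I rule: finite_induct) (auto simp: qf_add qf_scaleM qf_zero)

lemma trace_sum_left: "finite I \<Longrightarrow> trace ((\<Sum>i\<in>I. c i *\<^sub>R (P i :: real^'n^'n)) ** L) = (\<Sum>i\<in>I. c i * trace (P i ** L))"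
  by (simp add: trace_inner inner_sum_left)

lemma scalar_ineq:
  fixes l p :: real
  assumes "l \<ge> 0" "p > 0"
  shows "2*l - 2* sqrt l* sqrt p \<le> l * (ln l - ln p)"
proof (cases "l = 0")
  case True thus ?thesis by simp
next
  case False
  hence l: "l > 0" using assms by simp
  define q where "q = sqrt (p/l)"
  have h1: "ln q \<le> q - 1" unfolding q_def using assms l by (intro ln_le_minus_one) simp
  have h2: "ln q = (ln p - ln l)/2" unfolding q_def using assms l by (simp add: ln_sqrt ln_div)
  have h3: "q = sqrt l * sqrt p / l" unfolding q_def using assms l by (simp add: real_sqrt_divide field_simps)
  have "(ln p - ln l)/2 \<le> sqrt l * sqrt p / l - 1" using h1 h2 h3 by linarith
  hence "l * ((ln p - ln l)/2) \<le> l * (sqrt l * sqrt p / l - 1)" using l by (simp add: mult_left_mono)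
  moreover have "l * (sqrt l * sqrt p / l - 1) = sqrt l * sqrt p - l" using l by (simp add: field_simps)
  moreover have "l * ((ln p - ln l)/2) = (l * ln p - l * ln l)/2" by (simp add: algebra_simps)
  ultimately have "(l * ln p - l * ln l)/2 \<le> sqrt l * sqrt p - l" by simp
  hence "l * ln p - l * ln l \<le> 2 * (sqrt l * sqrt p - l)" by (simp add: field_simps)
  thus ?thesis by (simp add: algebra_simps)
qed

lemma decomp_density:
  fixes \<rho> :: "real^'n^'n"
  assumes "density_matrix \<rho>"
  shows "\<exists>V lam. orthogonal_matrix V \<and> \<rho> = V ** diag_mat lam ** transpose V \<and> (\<forall>j. 0 \<le> lam$j) \<and> (\<Sum>j\<in>UNIV. lam$j) = 1"
proof -
  have sym: "transpose \<rho> = \<rho>" and pos: "\<forall>x. 0 \<le> qf \<rho> x" and tr: "trace \<rho> = 1"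
    using assms by (auto simp: density_matrix_def psd_def symmetric_mat_def)
  obtain V lam where V: "orthogonal_matrix V" "\<rho> = V ** diag_mat lam ** transpose V"
    using spectral[OF sym] by blast
  have "\<forall>j. 0 \<le> lam$j" using eig_nonneg[OF V(1)] pos V(2) by metis
  moreover have "(\<Sum>j\<in>UNIV. lam$j) = 1" using tr V trace_one_spec by metis
  ultimately show ?thesis using V by blast
qed

lemma W_rows:
  fixes U V :: "real^'n^'n"
  assumes U: "orthogonal_matrix U" and V: "orthogonal_matrix V"
  shows "(\<Sum>k\<in>UNIV. ((transpose V ** U)$j$k)^2) = 1" "(\<Sum>j\<in>UNIV. ((transpose V ** U)$j$k)^2) = 1"
proof -
  define W where "W = transpose V ** U"
  have "W ** transpose W = mat 1"
    by (simp add: W_def matrix_transpose_mul matrix_mul_assoc)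
       (simp add: matrix_mul_assoc[symmetric] orth_UT[OF U] orth_UT[OF V] orth_TU[OF V])
  hence "(W ** transpose W) $ j $ j = 1" by (simp add: mat_def)
  hence "(\<Sum>k\<in>UNIV. (W$j$k)^2) = 1"
    by (simp add: matrix_matrix_mult_def transpose_def power2_eq_square)
  thus "(\<Sum>k\<in>UNIV. ((transpose V ** U)$j$k)^2) = 1" unfolding W_def .
  have "transpose W ** W = mat 1"
    by (simp add: W_def matrix_transpose_mul matrix_mul_assoc)
       (simp add: matrix_mul_assoc[symmetric] orth_UT[OF V] orth_TU[OF U])
  hence "(transpose W ** W) $ k $ k = 1" by (simp add: mat_def)
  hence "(\<Sum>j\<in>UNIV. (W$j$k)^2) = 1"
    by (simp add: matrix_matrix_mult_def transpose_def power2_eq_square)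
  thus "(\<Sum>j\<in>UNIV. ((transpose V ** U)$j$k)^2) = 1" unfolding W_def .
qed

lemma entropy_term:
  fixes V :: "real^'n^'n"
  assumes V: "orthogonal_matrix V" and r: "\<rho> = V ** diag_mat lam ** transpose V"
  shows "trace (\<rho> ** mat_fun ln \<rho>) = (\<Sum>j\<in>UNIV. lam$j * ln (lam$j))"
proof -
  have "trace (\<rho> ** mat_fun ln \<rho>) = (\<Sum>j\<in>UNIV. \<Sum>k\<in>UNIV. ((transpose V ** V)$j$k)^2 * lam$j * (\<chi> k. ln (lam$k))$k)"
    unfolding mat_fun_eq[OF V r] unfolding r by (rule trace_two[OF V V])
  also have "\<dots> = (\<Sum>j\<in>UNIV. \<Sum>k\<in>UNIV. if j = k then lam$j * ln (lam$j) else 0)"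
    by (rule sum.cong[OF refl], rule sum.cong[OF refl]) (simp add: orth_TU[OF V] mat_def)
  also have "\<dots> = (\<Sum>j\<in>UNIV. lam$j * ln (lam$j))" by simp
  finally show ?thesis .
qed

lemma cross_term:
  fixes U V :: "real^'n^'n"
  assumes U: "orthogonal_matrix U" and V: "orthogonal_matrix V"
    and r: "\<rho> = V ** diag_mat lam ** transpose V" and R: "R = U ** diag_mat p ** transpose U"
  shows "trace (\<rho> ** mat_fun ln R) = (\<Sum>j\<in>UNIV. \<Sum>k\<in>UNIV. ((transpose V ** U)$j$k)^2 * lam$j * ln (p$k))"
  unfolding mat_fun_eq[OF U R] unfolding r using trace_two[OF U V, of lam "\<chi> k. ln (p$k)"] by simp

lemma qf_spec_axis:
  fixes V :: "real^'n^'n"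
  assumes "orthogonal_matrix V"
  shows "qf (V ** diag_mat a ** transpose V) (V *v axis j 1) = a $ j"
proof -
  have "qf (V ** diag_mat a ** transpose V) (V *v axis j 1) = (\<Sum>k\<in>UNIV. a$k * ((axis j 1 :: real^'n)$k)^2)"
    by (rule qf_spec_V[OF assms])
  also have "\<dots> = (\<Sum>k\<in>UNIV. if k = j then a $ j else 0)"
    by (rule sum.cong) (auto simp: axis_def)
  also have "\<dots> = a $ j" by simp
  finally show ?thesis .
qed

lemma sum_mult_if:
  fixes f :: "'n::finite \<Rightarrow> real"
  shows "(\<Sum>k\<in>UNIV. f k * (if k = j then 1 else 0)) = f j"
proof -
  have "(\<Sum>k\<in>UNIV. f k * (if k = j then 1 else 0)) = (\<Sum>k\<in>UNIV. (if k = j then f j else 0))"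
    by (rule sum.cong) auto
  also have "\<dots> = f j" by simp
  finally show ?thesis .
qed

lemma qf_cross_axis:
  fixes U V :: "real^'n^'n"
  shows "qf (V ** diag_mat a ** transpose V) (U *v axis k 1) = (\<Sum>j\<in>UNIV. a$j * ((transpose V ** U)$j$k)^2)"
proof -
  have "transpose V *v (U *v axis k 1) = (transpose V ** U) *v axis k 1"
    by (simp add: matrix_vector_mul_assoc del: transpose_matrix_vector)
  moreover have "((transpose V ** U) *v axis k 1) $ j = (transpose V ** U)$j$k" for j
    by (simp add: matrix_vector_mult_def axis_def sum_mult_if)
  ultimately show ?thesis using qf_spec[of V a "U *v axis k 1"] by (simp del: transpose_matrix_vector)
qed

lemma pinsker_i:
  fixes \<rho> R A :: "real^'n^'n"
  assumes d\<rho>: "density_matrix \<rho>" and dR: "density_matrix R" and A: "psd A" "below_id A"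
    and c: "c > 0" and dom: "\<forall>u. c * qf \<rho> u \<le> qf R u"
  shows "(trace (A ** (\<rho> - R)))^2 \<le> trace (\<rho> ** mat_fun ln \<rho>) - trace (\<rho> ** mat_fun ln R)"
proof -
  obtain V lam where V: "orthogonal_matrix V" "\<rho> = V ** diag_mat lam ** transpose V"
      "\<forall>j. 0 \<le> lam$j" "(\<Sum>j\<in>UNIV. lam$j) = 1"
    using decomp_density[OF d\<rho>] by blast
  obtain U p where U: "orthogonal_matrix U" "R = U ** diag_mat p ** transpose U"
      "\<forall>j. 0 \<le> p$j" "(\<Sum>j\<in>UNIV. p$j) = 1"
    using decomp_density[OF dR] by blast
  define W where "W = transpose V ** U"
  have rowW: "(\<Sum>k\<in>UNIV. (W$j$k)^2) = 1" for j using W_rows[OF U(1) V(1)] W_def by simp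
  define t where "t = (\<Sum>j\<in>UNIV. \<Sum>k\<in>UNIV. (W$j$k)^2 * sqrt (lam$j) * sqrt (p$k))"
  define D where "D = trace (\<rho> ** mat_fun ln \<rho>) - trace (\<rho> ** mat_fun ln R)"
  have D_eq: "D = (\<Sum>j\<in>UNIV. \<Sum>k\<in>UNIV. (W$j$k)^2 * (lam$j * (ln (lam$j) - ln (p$k))))"
  proof -
    have "trace (\<rho> ** mat_fun ln \<rho>) = (\<Sum>j\<in>UNIV. lam$j * ln (lam$j))" by (rule entropy_term[OF V(1,2)])
    also have "\<dots> = (\<Sum>j\<in>UNIV. \<Sum>k\<in>UNIV. (W$j$k)^2 * (lam$j * ln (lam$j)))"
    proof (rule sum.cong[OF refl])
      fix j
      have "(\<Sum>k\<in>UNIV. (W$j$k)^2 * (lam$j * ln (lam$j))) = (\<Sum>k\<in>UNIV. (W$j$k)^2) * (lam$j * ln (lam$j))"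
        by (simp add: sum_distrib_right)
      thus "lam$j * ln (lam$j) = (\<Sum>k\<in>UNIV. (W$j$k)^2 * (lam$j * ln (lam$j)))" using rowW by simp
    qed
    finally have e1: "trace (\<rho> ** mat_fun ln \<rho>) = (\<Sum>j\<in>UNIV. \<Sum>k\<in>UNIV. (W$j$k)^2 * (lam$j * ln (lam$j)))" .
    have e2: "trace (\<rho> ** mat_fun ln R) = (\<Sum>j\<in>UNIV. \<Sum>k\<in>UNIV. (W$j$k)^2 * lam$j * ln (p$k))"
      using cross_term[OF U(1) V(1) V(2) U(2)] W_def by simp
    show ?thesis unfolding D_def e1 e2
      by (simp add: sum_subtractf[symmetric] algebra_simps)
  qed
  have supp: "(W$j$k)^2 * lam$j = 0" if pk: "p$k = 0" for j k
  proof -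
    have "qf R (U *v axis k 1) = p$k" using qf_spec_axis[OF U(1)] U(2) by simp
    moreover have q: "qf \<rho> (U *v axis k 1) = (\<Sum>j\<in>UNIV. lam$j * (W$j$k)^2)"
      using qf_cross_axis V(2) W_def by simp
    ultimately have "c * (\<Sum>j\<in>UNIV. lam$j * (W$j$k)^2) \<le> 0" using dom pk by metis
    hence le: "(\<Sum>j\<in>UNIV. lam$j * (W$j$k)^2) \<le> 0" using c by (simp add: mult_le_0_iff)
    have nn: "\<forall>j\<in>UNIV. 0 \<le> lam$j * (W$j$k)^2" using V(3) by simp
    have "0 \<le> (\<Sum>j\<in>UNIV. lam$j * (W$j$k)^2)" using nn by (intro sum_nonneg) auto
    hence "(\<Sum>j\<in>UNIV. lam$j * (W$j$k)^2) = 0" using le by linarith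
    hence "lam$j * (W$j$k)^2 = 0" using nn sum_nonneg_eq_0_iff[of UNIV "\<lambda>j. lam$j * (W$j$k)^2"] by simp
    thus ?thesis by (simp only: mult.commute)
  qed
  have D_ge: "2 - 2*t \<le> D"
  proof -
    have "(\<Sum>j\<in>UNIV. \<Sum>k\<in>UNIV. (W$j$k)^2 * (2*lam$j - 2 * sqrt (lam$j) * sqrt (p$k)))
        \<le> (\<Sum>j\<in>UNIV. \<Sum>k\<in>UNIV. (W$j$k)^2 * (lam$j * (ln (lam$j) - ln (p$k))))"
    proof (intro sum_mono)
      fix j k
      show "(W$j$k)^2 * (2*lam$j - 2 * sqrt (lam$j) * sqrt (p$k)) \<le> (W$j$k)^2 * (lam$j * (ln (lam$j) - ln (p$k)))"
      proof (cases "p$k = 0")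
        case True
        hence "(W$j$k)^2 * lam$j = 0" by (rule supp)
        thus ?thesis using True by auto
      next
        case False hence "p$k > 0" using U(3) by (metis less_eq_real_def)
        from scalar_ineq[OF V(3)[rule_format] this] show ?thesis by (simp add: mult_left_mono)
      qed
    qed
    moreover have "(\<Sum>j\<in>UNIV. \<Sum>k\<in>UNIV. (W$j$k)^2 * (2*lam$j - 2 * sqrt (lam$j) * sqrt (p$k))) = 2 - 2*t"
    proof -
      have "(\<Sum>j\<in>UNIV. \<Sum>k\<in>UNIV. (W$j$k)^2 * (2*lam$j - 2 * sqrt (lam$j) * sqrt (p$k)))
          = 2 * (\<Sum>j\<in>UNIV. \<Sum>k\<in>UNIV. (W$j$k)^2 * lam$j) - 2 * t"
        by (simp add: t_def sum_subtractf sum_distrib_left algebra_simps)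
      moreover have "(\<Sum>j\<in>UNIV. \<Sum>k\<in>UNIV. (W$j$k)^2 * lam$j) = 1"
      proof -
        have "(\<Sum>j\<in>UNIV. \<Sum>k\<in>UNIV. (W$j$k)^2 * lam$j) = (\<Sum>j\<in>UNIV. (\<Sum>k\<in>UNIV. (W$j$k)^2) * lam$j)"
          by (simp add: sum_distrib_right)
        also have "\<dots> = 1" using rowW V(4) by simp
        finally show ?thesis .
      qed
      ultimately show ?thesis by simp
    qed
    ultimately show ?thesis using D_eq by simp
  qed
  define sr where "sr = V ** diag_mat (\<chi> k. sqrt (lam$k)) ** transpose V"
  define sR where "sR = U ** diag_mat (\<chi> k. sqrt (p$k)) ** transpose U"
  have sr_sym: "transpose sr = sr" "transpose sR = sR" by (simp_all add: sr_def sR_def spec_transpose)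
  have srsq: "sr ** sr = \<rho>"
  proof -
    have "(\<chi> k. (\<chi> k. sqrt (lam$k))$k * (\<chi> k. sqrt (lam$k))$k) = lam"
      using V(3) by (simp add: vec_eq_iff)
    thus ?thesis unfolding sr_def spec_mult[OF V(1)] V(2) by simp
  qed
  have sRsq: "sR ** sR = R"
  proof -
    have "(\<chi> k. (\<chi> k. sqrt (p$k))$k * (\<chi> k. sqrt (p$k))$k) = p"
      using U(3) by (simp add: vec_eq_iff)
    thus ?thesis unfolding sR_def spec_mult[OF U(1)] U(2) by simp
  qed
  have t_eq: "trace (sr ** sR) = t"
    unfolding sr_def sR_def t_def W_def using trace_two[OF U(1) V(1)] by simp
  have t_eq2: "trace (sR ** sr) = t" using t_eq trace_mul_sym by metis
  have tr1: "trace \<rho> = 1" "trace R = 1" using d\<rho> dR by (auto simp: density_matrix_def)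
  define X where "X = sr - sR"
  define Y where "Y = sr + sR"
  have Xs: "transpose X = X" unfolding X_def using sr_sym by (simp add: tr_diff)
  have Ys: "transpose Y = Y" unfolding Y_def using sr_sym by (simp add: tr_add)
  have XX: "X \<bullet> X = 2 - 2*t"
  proof -
    have "X \<bullet> X = trace (X ** X)" using trace_inner[of X X] Xs by simp
    also have "X ** X = sr ** sr - sr ** sR - (sR ** sr - sR ** sR)" by (simp add: X_def mm_diff_l mm_diff_r)
    finally show ?thesis using srsq sRsq t_eq t_eq2 tr1 by (simp add: trace_sub)
  qed
  have YY: "Y \<bullet> Y = 2 + 2*t"
  proof -
    have "Y \<bullet> Y = trace (Y ** Y)" using trace_inner[of Y Y] Ys by simp
    also have "Y ** Y = sr ** sr + sr ** sR + (sR ** sr + sR ** sR)" by (simp add: Y_def mm_add_l mm_add_r)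
    finally show ?thesis using srsq sRsq t_eq t_eq2 tr1 by (simp add: trace_add)
  qed
  define M where "M = A - (1/2) *\<^sub>R mat 1"
  have Asym: "transpose A = A" using A(1) by (simp add: psd_def symmetric_mat_def)
  have Msym: "transpose M = M" unfolding M_def using Asym by (simp add: tr_diff transpose_scalar)
  have qfA: "0 \<le> qf A v" "qf A v \<le> v \<bullet> v" for v
  proof -
    show "0 \<le> qf A v" using A(1) by (simp add: psd_def)
    have "0 \<le> qf (mat 1 - A) v" using A(2) by (simp add: below_id_def psd_def)
    thus "qf A v \<le> v \<bullet> v" by (simp add: qf_diff qf_mat1)
  qed
  have qfM: "\<bar>qf M v\<bar> \<le> (1/2) * (v \<bullet> v)" for v
  proof -
    have "qf M v = qf A v - (1/2) * (v \<bullet> v)" by (simp add: M_def qf_diff qf_scaleM qf_mat1)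
    thus ?thesis using qfA[of v] by (intro abs_leI) linarith+
  qed
  have Mb: "(M *v v) \<bullet> (M *v v) \<le> (1/2)^2 * (v \<bullet> v)" for v
    by (rule polarization_bound[OF Msym _ qfM]) simp
  have fro: "(trace (M ** (X ** Y)))^2 \<le> (1/2)^2 * (X \<bullet> X) * (Y \<bullet> Y)"
    by (rule frob_bound[OF Msym Xs Ys Mb])
  have "X ** Y = (sr ** sr + sr ** sR) - (sR ** sr + sR ** sR)" by (simp add: X_def Y_def mm_diff_l mm_add_r)
  hence "trace (M ** (X ** Y)) = trace (M ** (sr ** sr)) + trace (M ** (sr ** sR)) - (trace (M ** (sR ** sr)) + trace (M ** (sR ** sR)))"
    by (simp add: mm_diff_r mm_add_r trace_add trace_sub)
  also have "trace (M ** (sr ** sR)) = trace (M ** (sR ** sr))"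
    by (rule trace_mult3_rev[OF Msym sr_sym])
  finally have "trace (M ** (X ** Y)) = trace (M ** (\<rho> - R))"
    using srsq sRsq by (simp add: mm_diff_r trace_sub)
  also have "\<dots> = trace (A ** (\<rho> - R))"
    using tr1 by (simp add: M_def mm_diff_l mm_scale_l trace_sub trace_scaleR)
  finally have aeq: "trace (M ** (X ** Y)) = trace (A ** (\<rho> - R))" .
  have "(trace (A ** (\<rho> - R)))^2 \<le> (1/2)^2 * (2 - 2*t) * (2 + 2*t)" using fro aeq XX YY by simp
  also have "\<dots> = 1 - t^2" by (simp add: power2_eq_square algebra_simps)
  also have "\<dots> \<le> 2 - 2*t" using power2_diff[of t 1] zero_le_power2[of "t-1"] by simp
  also have "\<dots> \<le> D" by (rule D_ge)
  finally show ?thesis unfolding D_def .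
qed

lemma sum_mat_entry: "(\<Sum>l\<in>I. c l *\<^sub>R (P l :: real^'n^'n)) $ i $ j = (\<Sum>l\<in>I. c l * P l $ i $ j)"
  by (simp add: sum_component)

lemma density_mix:
  fixes \<rho> :: "nat \<Rightarrow> real^'n^'n"
  assumes \<beta>: "\<And>i. i<m \<Longrightarrow> 0 \<le> \<beta> i" and dens: "\<And>i. i<m \<Longrightarrow> density_matrix (\<rho> i)"
    and sum1: "(\<Sum>i<m. \<beta> i) = 1"
  shows "density_matrix (\<Sum>l<m. \<beta> l *\<^sub>R \<rho> l)"
proof -
  define R where "R = (\<Sum>l<m. \<beta> l *\<^sub>R \<rho> l)"
  have sym: "transpose (\<rho> l) = \<rho> l" if "l<m" for l
    using dens[OF that] by (simp add: density_matrix_def psd_def symmetric_mat_def)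
  have "transpose R = R"
  proof -
    have "transpose R $ i $ j = R $ i $ j" for i j
      unfolding R_def transpose_def using sym_entry[OF sym]
      by (simp add: sum_mat_entry)
    thus ?thesis by (simp add: vec_eq_iff)
  qed
  moreover have "0 \<le> qf R u" for u
  proof -
    have "qf R u = (\<Sum>l<m. \<beta> l * qf (\<rho> l) u)" unfolding R_def by (rule qf_sum) simp
    also have "\<dots> \<ge> 0" using \<beta> dens by (intro sum_nonneg) (auto simp: density_matrix_def psd_def)
    finally show ?thesis .
  qed
  moreover have "trace R = 1"
  proof -
    have "trace R = (\<Sum>i\<in>UNIV. \<Sum>l<m. \<beta> l * \<rho> l $ i $ i)" unfolding R_def trace_def by (simp add: sum_mat_entry)
    also have "\<dots> = (\<Sum>l<m. \<beta> l * trace (\<rho> l))" by (subst sum.swap) (simp add: trace_def sum_distrib_left)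
    also have "\<dots> = (\<Sum>l<m. \<beta> l)" using dens by (intro sum.cong) (auto simp: density_matrix_def)
    finally show ?thesis using sum1 by simp
  qed
  ultimately show ?thesis unfolding R_def[symmetric] by (simp add: density_matrix_def psd_def symmetric_mat_def)
qed

lemma core:
  fixes A \<rho> :: "nat \<Rightarrow> real^'n^'n" and \<beta> :: "nat \<Rightarrow> real"
  assumes A: "\<And>i. i<m \<Longrightarrow> psd (A i) \<and> below_id (A i)"
    and \<beta>: "\<And>i. i<m \<Longrightarrow> 0 \<le> \<beta> i" and dens: "\<And>i. i<m \<Longrightarrow> density_matrix (\<rho> i)"
    and sum1: "(\<Sum>i<m. \<beta> i) = 1"
    and ent: "(\<Sum>i<m. \<beta> i * vn_entropy (\<rho> i)) \<ge> vn_entropy (\<Sum>i<m. \<beta> i *\<^sub>R \<rho> i) - \<epsilon>^2"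
    and eps: "\<epsilon> \<ge> 0"
  shows "(\<Sum>i<m. \<beta> i * trace (A i ** (\<rho> i - (\<Sum>l<m. \<beta> l *\<^sub>R \<rho> l)))) \<le> \<epsilon>"
proof -
  define R where "R = (\<Sum>l<m. \<beta> l *\<^sub>R \<rho> l)"
  have dR: "density_matrix R" unfolding R_def by (rule density_mix[OF \<beta> dens sum1])
  define a where "a i = trace (A i ** (\<rho> i - R))" for i
  define D where "D i = trace (\<rho> i ** mat_fun ln (\<rho> i)) - trace (\<rho> i ** mat_fun ln R)" for i
  have aD: "\<beta> i * (a i)^2 \<le> \<beta> i * D i" if i: "i<m" for i
  proof (cases "\<beta> i = 0")
    case True thus ?thesis by simp
  next
    case False
    hence bpos: "\<beta> i > 0" using \<beta>[OF i] by simp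
    have dom: "\<forall>u. \<beta> i * qf (\<rho> i) u \<le> qf R u"
    proof
      fix u
      have "qf R u = (\<Sum>l<m. \<beta> l * qf (\<rho> l) u)" unfolding R_def by (rule qf_sum) simp
      moreover have "\<beta> i * qf (\<rho> i) u \<le> (\<Sum>l<m. \<beta> l * qf (\<rho> l) u)"
        using i \<beta> dens by (intro member_le_sum) (auto simp: density_matrix_def psd_def)
      ultimately show "\<beta> i * qf (\<rho> i) u \<le> qf R u" by simp
    qed
    have "(a i)^2 \<le> D i" unfolding a_def D_def
      using pinsker_i[OF dens[OF i] dR _ _ bpos dom] A[OF i] by blast
    thus ?thesis using bpos by simp
  qed
  have chi: "(\<Sum>i<m. \<beta> i * D i) \<le> \<epsilon>^2"
  proof -
    have "(\<Sum>i<m. \<beta> i * D i) = (\<Sum>i<m. \<beta> i * trace (\<rho> i ** mat_fun ln (\<rho> i))) - (\<Sum>i<m. \<beta> i * trace (\<rho> i ** mat_fun ln R))"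
      by (simp add: D_def sum_subtractf[symmetric] algebra_simps)
    also have "(\<Sum>i<m. \<beta> i * trace (\<rho> i ** mat_fun ln R)) = trace (R ** mat_fun ln R)"
      unfolding R_def by (rule trace_sum_left[symmetric]) simp
    also have "(\<Sum>i<m. \<beta> i * trace (\<rho> i ** mat_fun ln (\<rho> i))) = - (\<Sum>i<m. \<beta> i * vn_entropy (\<rho> i))"
      by (simp add: vn_entropy_def sum_negf[symmetric])
    finally show ?thesis using ent by (simp add: vn_entropy_def R_def)
  qed
  have "(\<Sum>i<m. \<beta> i * \<bar>a i\<bar>)^2 \<le> (\<Sum>i<m. \<beta> i) * (\<Sum>i<m. \<beta> i * (a i)^2)"
  proof -
    have "(\<Sum>i<m. \<beta> i * \<bar>a i\<bar>) = (\<Sum>i<m. sqrt (\<beta> i) * (sqrt (\<beta> i) * \<bar>a i\<bar>))"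
      using \<beta> by (intro sum.cong) (auto simp: mult.assoc[symmetric])
    moreover have "(\<Sum>i<m. \<beta> i) = (\<Sum>i<m. (sqrt (\<beta> i))^2)" using \<beta> by (intro sum.cong) auto
    moreover have "(\<Sum>i<m. \<beta> i * (a i)^2) = (\<Sum>i<m. (sqrt (\<beta> i) * \<bar>a i\<bar>)^2)"
      using \<beta> by (intro sum.cong) (auto simp: power_mult_distrib)
    ultimately show ?thesis by (simp only: Cauchy_Schwarz_ineq_sum)
  qed
  also have "\<dots> \<le> (\<Sum>i<m. \<beta> i * D i)"
  proof -
    have "(\<Sum>i<m. \<beta> i * (a i)^2) \<le> (\<Sum>i<m. \<beta> i * D i)" by (rule sum_mono) (simp add: aD)
    thus ?thesis using sum1 by simp
  qed
  also have "\<dots> \<le> \<epsilon>^2" by (rule chi)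
  finally have "(\<Sum>i<m. \<beta> i * \<bar>a i\<bar>) \<le> \<epsilon>" using eps by (rule power2_le_imp_le)
  moreover have "(\<Sum>i<m. \<beta> i * a i) \<le> (\<Sum>i<m. \<beta> i * \<bar>a i\<bar>)"
    using \<beta> by (intro sum_mono) (simp add: mult_left_mono)
  ultimately show ?thesis unfolding a_def R_def by simp
qed

lemma fin_deg: "finite {a :: 'n::finite \<Rightarrow> nat. sum a UNIV \<le> d}"
proof -
  have "{a :: 'n \<Rightarrow> nat. sum a UNIV \<le> d} \<subseteq> {f. \<forall>x. (x \<in> UNIV \<longrightarrow> f x \<in> {..d}) \<and> (x \<notin> UNIV \<longrightarrow> f x = 0)}"
  proof (clarsimp)
    fix a :: "'n \<Rightarrow> nat" and x assume "sum a UNIV \<le> d"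
    moreover have "a x \<le> sum a UNIV" by (rule member_le_sum) auto
    ultimately show "a x \<le> d" by simp
  qed
  moreover have "finite {f. \<forall>x. (x \<in> (UNIV::'n set) \<longrightarrow> f x \<in> {..d}) \<and> (x \<notin> UNIV \<longrightarrow> f x = (0::nat))}"
    by (rule finite_set_of_finite_funs) auto
  ultimately show ?thesis by (rule finite_subset)
qed

lemma monomial_add: "monomial_fun (\<lambda>k. a k + b k) x = monomial_fun a x * monomial_fun b x"
  by (simp add: monomial_fun_def power_add prod.distrib)

lemma pf_single: "sum s UNIV \<le> d \<Longrightarrow> poly_fun d (\<lambda>x. c * monomial_fun s x)"
  unfolding poly_fun_def
proof (intro exI[of _ "\<lambda>a. if a = s then c else 0"])
  assume s: "sum s UNIV \<le> d"
  have "(\<Sum>a\<in>{a. sum a UNIV \<le> d}. (if a = s then c else 0) * monomial_fun a x) = c * monomial_fun s x" for x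
  proof -
    have "(\<Sum>a\<in>{a. sum a UNIV \<le> d}. (if a = s then c else 0) * monomial_fun a x)
        = (\<Sum>a\<in>{a. sum a UNIV \<le> d}. (if a = s then c * monomial_fun s x else 0))"
      by (rule sum.cong) auto
    also have "\<dots> = c * monomial_fun s x" by (simp add: fin_deg s)
    finally show ?thesis .
  qed
  thus "(\<lambda>x. c * monomial_fun s x) = (\<lambda>x. \<Sum>a\<in>{a. sum a UNIV \<le> d}. (if a = s then c else 0) * monomial_fun a x)"
    by simp
qed

lemma pf_add: "poly_fun d f \<Longrightarrow> poly_fun d g \<Longrightarrow> poly_fun d (\<lambda>x. f x + g x)"
  unfolding poly_fun_def
proof (elim exE)
  fix c e assume f: "f = (\<lambda>x. \<Sum>a\<in>{a. sum a UNIV \<le> d}. c a * monomial_fun a x)"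
    and g: "g = (\<lambda>x. \<Sum>a\<in>{a. sum a UNIV \<le> d}. e a * monomial_fun a x)"
  show "\<exists>c. (\<lambda>x. f x + g x) = (\<lambda>x. \<Sum>a\<in>{a. sum a UNIV \<le> d}. c a * monomial_fun a x)"
    by (intro exI[of _ "\<lambda>a. c a + e a"]) (simp add: f g sum.distrib algebra_simps)
qed

lemma pf_scale: "poly_fun d f \<Longrightarrow> poly_fun d (\<lambda>x. c * f x)"
  unfolding poly_fun_def
proof (elim exE)
  fix e assume f: "f = (\<lambda>x. \<Sum>a\<in>{a. sum a UNIV \<le> d}. e a * monomial_fun a x)"
  show "\<exists>e'. (\<lambda>x. c * f x) = (\<lambda>x. \<Sum>a\<in>{a. sum a UNIV \<le> d}. e' a * monomial_fun a x)"
    by (intro exI[of _ "\<lambda>a. c * e a"]) (simp add: f sum_distrib_left algebra_simps)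
qed

lemma pf_zero: "poly_fun d (\<lambda>x. 0)"
  unfolding poly_fun_def by (intro exI[of _ "\<lambda>a. 0"]) simp

lemma pf_sum: "finite I \<Longrightarrow> (\<And>i. i \<in> I \<Longrightarrow> poly_fun d (f i)) \<Longrightarrow> poly_fun d (\<lambda>x. \<Sum>i\<in>I. f i x)"
  by (induction I rule: finite_induct) (auto intro: pf_add pf_zero)

lemma pf_mono:
  assumes "d \<le> e" "poly_fun d f" shows "poly_fun e f"
proof -
  obtain c where f: "f = (\<lambda>x. \<Sum>a\<in>{a. sum a UNIV \<le> d}. c a * monomial_fun a x)"
    using assms(2) unfolding poly_fun_def by blast
  have "poly_fun e (\<lambda>x. c a * monomial_fun a x)" if "a \<in> {a. sum a UNIV \<le> d}" for a
    using that assms(1) by (intro pf_single) simp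
  hence "poly_fun e (\<lambda>x. \<Sum>a\<in>{a. sum a UNIV \<le> d}. c a * monomial_fun a x)"
    by (intro pf_sum fin_deg)
  thus ?thesis using f by simp
qed

lemma pf_mult:
  fixes f g :: "real^'n::finite \<Rightarrow> real"
  assumes "poly_fun d f" "poly_fun e g" shows "poly_fun (d + e) (\<lambda>x. f x * g x)"
proof -
  obtain c where f: "f = (\<lambda>x. \<Sum>a\<in>{a. sum a UNIV \<le> d}. c a * monomial_fun a x)"
    using assms(1) unfolding poly_fun_def by blast
  obtain c' where g: "g = (\<lambda>x. \<Sum>a\<in>{a. sum a UNIV \<le> e}. c' a * monomial_fun a x)"
    using assms(2) unfolding poly_fun_def by blast
  have eq: "(\<lambda>x. f x * g x) = (\<lambda>x. \<Sum>a\<in>{a. sum a UNIV \<le> d}. \<Sum>b\<in>{a. sum a UNIV \<le> e}.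
       (c a * c' b) * monomial_fun (\<lambda>k. a k + b k) x)"
  proof (rule ext)
    fix x
    have "f x * g x = (\<Sum>a\<in>{a. sum a UNIV \<le> d}. \<Sum>b\<in>{a. sum a UNIV \<le> e}. (c a * monomial_fun a x) * (c' b * monomial_fun b x))"
      unfolding f g by (rule sum_product)
    also have "\<dots> = (\<Sum>a\<in>{a. sum a UNIV \<le> d}. \<Sum>b\<in>{a. sum a UNIV \<le> e}. (c a * c' b) * monomial_fun (\<lambda>k. a k + b k) x)"
      by (simp only: monomial_add mult_ac)
    finally show "f x * g x = (\<Sum>a\<in>{a. sum a UNIV \<le> d}. \<Sum>b\<in>{a. sum a UNIV \<le> e}. (c a * c' b) * monomial_fun (\<lambda>k. a k + b k) x)" .
  qed
  have "poly_fun (d+e) (\<lambda>x. \<Sum>a\<in>{a. sum a UNIV \<le> d}. \<Sum>b\<in>{a. sum a UNIV \<le> e}.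
       (c a * c' b) * monomial_fun (\<lambda>k. a k + b k) x)"
  proof (intro pf_sum fin_deg pf_single)
    fix a b :: "'n \<Rightarrow> nat" assume "a \<in> {a. sum a UNIV \<le> d}" "b \<in> {a. sum a UNIV \<le> e}"
    thus "(\<Sum>k\<in>UNIV. a k + b k) \<le> d + e" by (simp add: sum.distrib add_mono)
  qed
  thus ?thesis using eq by simp
qed

lemma pf_mult2: "poly_fun 1 f \<Longrightarrow> poly_fun 1 g \<Longrightarrow> poly_fun 2 (\<lambda>x. f x * g x)"
  using pf_mult[of 1 f 1 g] by (simp add: numeral_2_eq_2)

lemma pf_mult22: "poly_fun 2 f \<Longrightarrow> poly_fun 2 g \<Longrightarrow> poly_fun 4 (\<lambda>x. f x * g x)"
  using pf_mult[of 2 f 2 g] by simp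

lemma pf_const: "poly_fun d (\<lambda>x. c)"
proof -
  have "poly_fun d (\<lambda>x. c * monomial_fun (\<lambda>k. 0) x)" by (intro pf_single) simp
  thus ?thesis by (simp add: monomial_fun_def)
qed

lemma pf_coord: "poly_fun 1 (\<lambda>x. x $ j)"
proof -
  have "poly_fun 1 (\<lambda>x. 1 * monomial_fun (\<lambda>k. if k = j then 1 else 0) x)"
    by (intro pf_single) (simp add: sum.delta)
  moreover have "monomial_fun (\<lambda>k. if k = j then 1 else 0) x = x $ j" for x
  proof -
    have "monomial_fun (\<lambda>k. if k = j then 1 else 0) x = (\<Prod>k\<in>UNIV. if k = j then x $ k else 1)"
      unfolding monomial_fun_def by (rule prod.cong) auto
    thus ?thesis by simp
  qed
  ultimately show ?thesis by simp
qed

lemma pf_diff: "poly_fun d f \<Longrightarrow> poly_fun d g \<Longrightarrow> poly_fun d (\<lambda>x. f x - g x)"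
  using pf_add[of d f "\<lambda>x. (-1) * g x"] pf_scale[of d g "-1"] by simp

lemma pf_lin: "poly_fun 1 (\<lambda>x. L \<bullet> (x::real^'n::finite))"
proof -
  have "poly_fun 1 (\<lambda>x. \<Sum>j\<in>UNIV. L$j * x$j)" by (intro pf_sum pf_scale pf_coord) auto
  thus ?thesis by (simp add: inner_vec_def)
qed

lemma pf_qf: "poly_fun 2 (qf (A::real^'n::finite^'n))"
proof -
  have "poly_fun 2 (\<lambda>x. \<Sum>i\<in>UNIV. \<Sum>j\<in>UNIV. A$i$j * (x$i * x$j))"
    by (intro pf_sum pf_scale pf_mult2 pf_coord) auto
  moreover have "qf A = (\<lambda>x. \<Sum>i\<in>UNIV. \<Sum>j\<in>UNIV. A$i$j * (x$i * x$j))"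
    by (auto simp: fun_eq_iff qf_def inner_vec_def matrix_vector_mult_def sum_distrib_left mult_ac)
  ultimately show ?thesis by simp
qed

lemma norm2_sum: "(norm (x::real^'n::finite))^2 = (\<Sum>j\<in>UNIV. x$j * x$j)"
  by (simp add: power2_norm_eq_inner inner_vec_def)

lemma pf_norm2: "poly_fun 2 (\<lambda>x. (norm (x::real^'n::finite))^2)"
proof -
  have "poly_fun 2 (\<lambda>x. \<Sum>j\<in>UNIV. x$j * x$j :: real)"
    by (intro pf_sum pf_mult2 pf_coord) auto
  thus ?thesis by (simp add: norm2_sum)
qed

lemma psd_sos:
  fixes P :: "real^'n^'n"
  assumes "psd P"
  shows "\<exists>L :: 'n \<Rightarrow> real^'n. \<forall>x. qf P x = (\<Sum>k\<in>UNIV. (L k \<bullet> x)^2)"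
proof -
  have sym: "transpose P = P" using assms by (simp add: psd_def symmetric_mat_def)
  obtain U d where U: "orthogonal_matrix U" "P = U ** diag_mat d ** transpose U"
    using spectral[OF sym] by blast
  have d: "0 \<le> d$k" for k using eig_nonneg[OF U(1)] assms U(2) by (metis psd_def)
  define L where "L k = (\<chi> i. sqrt (d$k) * U$i$k)" for k
  have "qf P x = (\<Sum>k\<in>UNIV. (L k \<bullet> x)^2)" for x
  proof -
    have "qf P x = (\<Sum>k\<in>UNIV. d$k * ((transpose U *v x)$k)^2)" using qf_spec U(2) by simp
    also have "\<dots> = (\<Sum>k\<in>UNIV. (L k \<bullet> x)^2)"
    proof (rule sum.cong[OF refl])
      fix k
      have "L k \<bullet> x = sqrt (d$k) * (transpose U *v x)$k"
        by (simp add: L_def inner_vec_def matrix_vector_mult_def transpose_def sum_distrib_left mult_ac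
             del: transpose_matrix_vector)
      thus "d$k * ((transpose U *v x)$k)^2 = (L k \<bullet> x)^2" using d[of k] by (simp add: power_mult_distrib)
    qed
    finally show ?thesis .
  qed
  thus ?thesis by blast
qed

context
  fixes E :: "(real^'n::finite \<Rightarrow> real) \<Rightarrow> real"
  assumes pe: "pseudo_exp4 E"
begin

lemma Eadd: "poly_fun 4 f \<Longrightarrow> poly_fun 4 g \<Longrightarrow> E (\<lambda>x. f x + g x) = E f + E g"
  using pe by (simp add: pseudo_exp4_def)
lemma Escale: "poly_fun 4 f \<Longrightarrow> E (\<lambda>x. c * f x) = c * E f"
  using pe by (simp add: pseudo_exp4_def)
lemma E1: "E (\<lambda>x. 1) = 1"
  using pe by (simp add: pseudo_exp4_def)
lemma Esq: "poly_fun 2 Q \<Longrightarrow> 0 \<le> E (\<lambda>x. (Q x)^2)"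
  using pe by (simp add: pseudo_exp4_def)

lemma Ezero: "E (\<lambda>x. 0) = 0"
  using Escale[OF pf_const, of 0 1] by simp

lemma Esum: "finite I \<Longrightarrow> (\<And>i. i \<in> I \<Longrightarrow> poly_fun 4 (f i)) \<Longrightarrow> E (\<lambda>x. \<Sum>i\<in>I. f i x) = (\<Sum>i\<in>I. E (f i))"
proof (induction I rule: finite_induct)
  case empty thus ?case by (simp add: Ezero)
next
  case (insert a F)
  have "E (\<lambda>x. \<Sum>i\<in>insert a F. f i x) = E (\<lambda>x. f a x + (\<Sum>i\<in>F. f i x))"
    using insert.hyps by simp
  also have "\<dots> = E (f a) + E (\<lambda>x. \<Sum>i\<in>F. f i x)"
    using insert.prems insert.hyps by (intro Eadd pf_sum) auto
  finally show ?case using insert by simp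
qed

lemma Esum_scale: "finite I \<Longrightarrow> (\<And>i. i \<in> I \<Longrightarrow> poly_fun 4 (f i)) \<Longrightarrow>
    E (\<lambda>x. \<Sum>i\<in>I. c i * f i x) = (\<Sum>i\<in>I. c i * E (f i))"
  by (subst Esum) (auto intro: pf_scale simp: Escale)

lemma Esos: "finite I \<Longrightarrow> (\<And>i. i \<in> I \<Longrightarrow> poly_fun 2 (q i)) \<Longrightarrow> 0 \<le> E (\<lambda>x. \<Sum>i\<in>I. (q i x)^2)"
proof -
  assume I: "finite I" and q: "\<And>i. i \<in> I \<Longrightarrow> poly_fun 2 (q i)"
  have "E (\<lambda>x. \<Sum>i\<in>I. (q i x)^2) = (\<Sum>i\<in>I. E (\<lambda>x. (q i x)^2))"
    using I q by (intro Esum) (auto simp: power2_eq_square intro: pf_mult22)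
  also have "\<dots> \<ge> 0" using q by (intro sum_nonneg Esq)
  finally show ?thesis .
qed

lemma Ediff: "poly_fun 4 f \<Longrightarrow> poly_fun 4 g \<Longrightarrow> E (\<lambda>x. f x - g x) = E f - E g"
  using Eadd[of f "\<lambda>x. (-1) * g x"] Escale[of g "-1"] pf_scale[of 4 g "-1"] by simp


lemma E_psd: "psd B \<Longrightarrow> 0 \<le> E (qf B)"
proof -
  assume B: "psd B"
  obtain L :: "'n \<Rightarrow> real^'n" where L: "\<forall>x. qf B x = (\<Sum>k\<in>UNIV. (L k \<bullet> x)^2)" using psd_sos[OF B] by blast
  have "qf B = (\<lambda>x. \<Sum>k\<in>UNIV. (L k \<bullet> x)^2)" using L by auto
  moreover have "0 \<le> E (\<lambda>x. \<Sum>k\<in>UNIV. (L k \<bullet> x)^2)"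
    by (rule Esos) (auto intro: pf_mono[OF _ pf_lin])
  ultimately show ?thesis by simp
qed

lemma E_psd2: "psd P \<Longrightarrow> psd Q \<Longrightarrow> 0 \<le> E (\<lambda>x. qf P x * qf Q x)"
proof -
  assume P: "psd P" and Q: "psd Q"
  obtain L :: "'n \<Rightarrow> real^'n" where L: "\<forall>x. qf P x = (\<Sum>k\<in>UNIV. (L k \<bullet> x)^2)" using psd_sos[OF P] by blast
  obtain L' :: "'n \<Rightarrow> real^'n" where L': "\<forall>x. qf Q x = (\<Sum>k\<in>UNIV. (L' k \<bullet> x)^2)" using psd_sos[OF Q] by blast
  have "(\<lambda>x. qf P x * qf Q x) = (\<lambda>x. \<Sum>kl\<in>UNIV. ((L (fst kl) \<bullet> x) * (L' (snd kl) \<bullet> x))^2)"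
  proof (rule ext)
    fix x
    have "qf P x * qf Q x = (\<Sum>k\<in>UNIV. \<Sum>l\<in>UNIV. (L k \<bullet> x)^2 * (L' l \<bullet> x)^2)"
      using L L' by (simp add: sum_product)
    also have "\<dots> = (\<Sum>kl\<in>UNIV \<times> UNIV. (L (fst kl) \<bullet> x)^2 * (L' (snd kl) \<bullet> x)^2)"
      by (rule trans[OF sum.cartesian_product]) (rule sum.cong, auto)
    finally show "qf P x * qf Q x = (\<Sum>kl\<in>UNIV. ((L (fst kl) \<bullet> x) * (L' (snd kl) \<bullet> x))^2)"
      by (simp add: power_mult_distrib UNIV_Times_UNIV[symmetric] del: UNIV_Times_UNIV)
  qed
  moreover have "0 \<le> E (\<lambda>x. \<Sum>kl\<in>UNIV. ((L (fst kl) \<bullet> x) * (L' (snd kl) \<bullet> x))^2)"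
    by (rule Esos) (auto intro: pf_mult2 pf_lin)
  ultimately show ?thesis by simp
qed

lemma pf_xxh: "poly_fun 2 h \<Longrightarrow> poly_fun 4 (\<lambda>x. x$j * x$k * h x)"
  by (intro pf_mult22 pf_mult2 pf_coord)

lemma E_quad:
  assumes h: "poly_fun 2 h"
  shows "E (\<lambda>x. qf C x * h x) = (\<Sum>j\<in>UNIV. \<Sum>k\<in>UNIV. C$j$k * E (\<lambda>x. x$j * x$k * h x))"
proof -
  have "(\<lambda>x. qf C x * h x) = (\<lambda>x. \<Sum>j\<in>UNIV. \<Sum>k\<in>UNIV. C$j$k * (x$j * x$k * h x))"
    by (auto simp: fun_eq_iff qf_def inner_vec_def matrix_vector_mult_def sum_distrib_left sum_distrib_right mult_ac)
  moreover have "E (\<lambda>x. \<Sum>j\<in>UNIV. \<Sum>k\<in>UNIV. C$j$k * (x$j * x$k * h x)) =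
      (\<Sum>j\<in>UNIV. E (\<lambda>x. \<Sum>k\<in>UNIV. C$j$k * (x$j * x$k * h x)))"
    by (rule Esum) (auto intro!: pf_sum pf_scale pf_xxh h)
  moreover have "E (\<lambda>x. \<Sum>k\<in>UNIV. C$j$k * (x$j * x$k * h x)) = (\<Sum>k\<in>UNIV. C$j$k * E (\<lambda>x. x$j * x$k * h x))" for j
    by (rule Esum_scale) (auto intro: pf_xxh h)
  ultimately show ?thesis by simp
qed


end

lemma outer_psd: "psd (outer (v::real^'n))"
proof -
  have "qf (outer v) x = (v \<bullet> x)^2" for x
  proof -
    have "qf (outer v) x = (\<Sum>i\<in>UNIV. \<Sum>j\<in>UNIV. (x$i * v$i) * (v$j * x$j))"
      by (simp add: qf_def outer_def inner_vec_def matrix_vector_mult_def sum_distrib_left mult_ac)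
    also have "\<dots> = (\<Sum>i\<in>UNIV. x$i * v$i) * (\<Sum>j\<in>UNIV. v$j * x$j)" by (simp add: sum_product)
    finally show ?thesis by (simp add: inner_vec_def power2_eq_square mult.commute)
  qed
  moreover have "transpose (outer v) = outer v" by (simp add: outer_def transpose_def vec_eq_iff mult.commute)
  ultimately show ?thesis by (simp add: psd_def symmetric_mat_def)
qed

lemma pseudo_main:
  fixes A B :: "nat \<Rightarrow> real^'n^'n" and E :: "(real^'n \<Rightarrow> real) \<Rightarrow> real" and \<rho> :: "nat \<Rightarrow> real^'n^'n"
  assumes eps: "\<epsilon> \<ge> 0"
    and AA: "\<And>i. i < m \<Longrightarrow> psd (A i) \<and> below_id (A i)"
    and BB: "\<And>i. i < m \<Longrightarrow> psd (B i)"
    and Bsum: "\<And>x. (\<Sum>i<m. qf (B i) x) = (norm x)^2"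
    and pe: "pseudo_exp4 E"
    and cons: "\<forall>Q. poly_fun 2 Q \<longrightarrow> E (\<lambda>x. ((norm x)^2 - 1) * Q x) = 0"
    and rho: "\<forall>i<m. let \<beta> = E (qf (B i)) in
          (\<beta> > 0 \<longrightarrow> \<rho> i = (\<chi> j k. E (\<lambda>x. x $ j * x $ k * qf (B i) x) / \<beta>)) \<and>
          (\<beta> = 0 \<longrightarrow> density_matrix (\<rho> i))"
    and ent: "(\<Sum>i<m. E (qf (B i)) * vn_entropy (\<rho> i)) \<ge> vn_entropy (\<Sum>i<m. E (qf (B i)) *\<^sub>R \<rho> i) - \<epsilon>^2"
  shows "(\<Sum>i<m. E (qf (A i)) * E (qf (B i))) \<ge> (\<Sum>i<m. E (\<lambda>x. qf (A i) x * qf (B i) x)) - \<epsilon>"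
proof -
  define \<beta> where "\<beta> i = E (qf (B i))" for i
  have Enorm: "E (\<lambda>x. (norm x)^2 * Q x) = E Q" if Q: "poly_fun 2 Q" for Q
  proof -
    have "(\<lambda>x. (norm x)^2 * Q x) = (\<lambda>x. ((norm x)^2 - 1) * Q x + Q x)" by (auto simp: algebra_simps)
    moreover have "E (\<lambda>x. ((norm x)^2 - 1) * Q x + Q x) = E (\<lambda>x. ((norm x)^2 - 1) * Q x) + E Q"
    proof (rule Eadd[OF pe])
      have "poly_fun 2 (\<lambda>x::real^'n. (norm x)^2 - 1)" by (rule pf_diff[OF pf_norm2 pf_const])
      thus "poly_fun 4 (\<lambda>x. ((norm x)^2 - 1) * Q x)" by (rule pf_mult22[OF _ Q])
      show "poly_fun 4 Q" by (rule pf_mono[OF _ Q]) simp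
    qed
    ultimately show ?thesis using cons Q by simp
  qed
  have bnn: "0 \<le> \<beta> i" if "i<m" for i using E_psd[OF pe BB[OF that]] \<beta>_def by simp
  have bsum: "(\<Sum>i<m. \<beta> i) = 1"
  proof -
    have "(\<Sum>i<m. \<beta> i) = E (\<lambda>x. \<Sum>i<m. qf (B i) x)" unfolding \<beta>_def
      by (rule Esum[OF pe, symmetric]) (auto intro: pf_mono[OF _ pf_qf])
    also have "(\<lambda>x. \<Sum>i<m. qf (B i) x) = (\<lambda>x. (norm x)^2 * 1)" using Bsum by simp
    also have "E \<dots> = E (\<lambda>x. 1)" by (rule Enorm) (rule pf_const)
    finally show ?thesis using E1[OF pe] by simp
  qed
  have rhoP: "\<rho> i = (\<chi> j k. E (\<lambda>x. x$j * x$k * qf (B i) x) / \<beta> i)" if "i<m" "\<beta> i > 0" for i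
    using rho that unfolding \<beta>_def Let_def by auto
  have dens: "density_matrix (\<rho> i)" if i: "i<m" for i
  proof (cases "\<beta> i = 0")
    case True thus ?thesis using rho i unfolding \<beta>_def Let_def by auto
  next
    case False
    hence bp: "\<beta> i > 0" using bnn[OF i] by simp
    note r = rhoP[OF i bp]
    have sym: "transpose (\<rho> i) = \<rho> i" by (simp add: r transpose_def vec_eq_iff mult_ac)
    have qfr: "qf (\<rho> i) v = E (\<lambda>x. qf (outer v) x * qf (B i) x) / \<beta> i" for v
    proof -
      have "E (\<lambda>x. qf (outer v) x * qf (B i) x) = (\<Sum>j\<in>UNIV. \<Sum>k\<in>UNIV. (outer v)$j$k * E (\<lambda>x. x$j * x$k * qf (B i) x))"
        by (rule E_quad[OF pe pf_qf])
      moreover have "qf (\<rho> i) v = (\<Sum>j\<in>UNIV. \<Sum>k\<in>UNIV. (outer v)$j$k * E (\<lambda>x. x$j * x$k * qf (B i) x)) / \<beta> i"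
        by (simp add: r qf_def outer_def inner_vec_def matrix_vector_mult_def sum_distrib_left sum_divide_distrib mult_ac)
      ultimately show ?thesis by simp
    qed
    have "0 \<le> qf (\<rho> i) v" for v using qfr E_psd2[OF pe outer_psd BB[OF i]] bp by simp
    moreover have "trace (\<rho> i) = 1"
    proof -
      have "trace (\<rho> i) = (\<Sum>j\<in>UNIV. E (\<lambda>x. x$j * x$j * qf (B i) x)) / \<beta> i"
        by (simp add: r trace_def sum_divide_distrib)
      also have "(\<Sum>j\<in>UNIV. E (\<lambda>x. x$j * x$j * qf (B i) x)) = E (\<lambda>x. \<Sum>j\<in>UNIV. x$j * x$j * qf (B i) x)"
        by (rule Esum[OF pe, symmetric]) (auto intro: pf_xxh[OF pe] pf_qf)
      also have "(\<lambda>x. \<Sum>j\<in>UNIV. x$j * x$j * qf (B i) x) = (\<lambda>x. (norm x)^2 * qf (B i) x)"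
        by (simp add: norm2_sum sum_distrib_right)
      also have "E \<dots> = \<beta> i" unfolding \<beta>_def by (rule Enorm[OF pf_qf])
      finally show ?thesis using bp by simp
    qed
    ultimately show ?thesis using sym by (simp add: density_matrix_def psd_def symmetric_mat_def)
  qed
  have key: "E (\<lambda>x. qf P x * qf (B l) x) = \<beta> l * trace (P ** \<rho> l)" if P: "psd P" "below_id P" and l: "l<m" for P l
  proof (cases "\<beta> l = 0")
    case True
    have "0 \<le> E (\<lambda>x. qf P x * qf (B l) x)" by (rule E_psd2[OF pe P(1) BB[OF l]])
    moreover have "E (\<lambda>x. qf P x * qf (B l) x) \<le> 0"
    proof -
      have "(\<lambda>x. (norm x)^2 * qf (B l) x) = (\<lambda>x. qf P x * qf (B l) x + qf (mat 1 - P) x * qf (B l) x)"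
        by (auto simp: qf_diff qf_mat1 power2_norm_eq_inner algebra_simps)
      hence "E (\<lambda>x. (norm x)^2 * qf (B l) x) = E (\<lambda>x. qf P x * qf (B l) x) + E (\<lambda>x. qf (mat 1 - P) x * qf (B l) x)"
        by (simp add: Eadd[OF pe] pf_mult22 pf_qf)
      moreover have "0 \<le> E (\<lambda>x. qf (mat 1 - P) x * qf (B l) x)"
        using P(2) by (intro E_psd2[OF pe _ BB[OF l]]) (simp add: below_id_def)
      moreover have "E (\<lambda>x. (norm x)^2 * qf (B l) x) = 0" using Enorm[OF pf_qf] True \<beta>_def by simp
      ultimately show ?thesis by linarith
    qed
    ultimately show ?thesis using True by simp
  next
    case False
    hence bp: "\<beta> l > 0" using bnn[OF l] by simp
    note r = rhoP[OF l bp]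
    have rsym: "transpose (\<rho> l) = \<rho> l" using dens[OF l] by (simp add: density_matrix_def psd_def symmetric_mat_def)
    have "E (\<lambda>x. qf P x * qf (B l) x) = (\<Sum>j\<in>UNIV. \<Sum>k\<in>UNIV. P$j$k * E (\<lambda>x. x$j * x$k * qf (B l) x))"
      by (rule E_quad[OF pe pf_qf])
    also have "\<dots> = (\<Sum>j\<in>UNIV. \<Sum>k\<in>UNIV. \<beta> l * (P$j$k * (\<rho> l)$j$k))"
      using bp by (simp add: r)
    also have "\<dots> = \<beta> l * (\<Sum>j\<in>UNIV. \<Sum>k\<in>UNIV. P$j$k * (\<rho> l)$k$j)"
      by (simp add: sum_distrib_left sym_entry[OF rsym])
    also have "(\<Sum>j\<in>UNIV. \<Sum>k\<in>UNIV. P$j$k * (\<rho> l)$k$j) = trace (P ** \<rho> l)"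
      by (simp add: trace_def matrix_matrix_mult_def)
    finally show ?thesis .
  qed
  define R where "R = (\<Sum>l<m. \<beta> l *\<^sub>R \<rho> l)"
  have EA: "E (qf (A i)) = trace (A i ** R)" if i: "i<m" for i
  proof -
    have "E (qf (A i)) = E (\<lambda>x. (norm x)^2 * qf (A i) x)" by (rule Enorm[OF pf_qf, symmetric])
    also have "(\<lambda>x. (norm x)^2 * qf (A i) x) = (\<lambda>x. \<Sum>l<m. qf (A i) x * qf (B l) x)"
      by (simp add: Bsum[symmetric] sum_distrib_left sum_distrib_right mult_ac)
    also have "E \<dots> = (\<Sum>l<m. E (\<lambda>x. qf (A i) x * qf (B l) x))"
      by (rule Esum[OF pe]) (auto intro: pf_mult22 pf_qf)
    also have "\<dots> = (\<Sum>l<m. \<beta> l * trace (A i ** \<rho> l))"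
    proof (rule sum.cong[OF refl])
      fix l assume "l \<in> {..<m}"
      thus "E (\<lambda>x. qf (A i) x * qf (B l) x) = \<beta> l * trace (A i ** \<rho> l)"
        using key[OF conjunct1[OF AA[OF i]] conjunct2[OF AA[OF i]]] by simp
    qed
    also have "\<dots> = (\<Sum>l<m. \<beta> l * trace (\<rho> l ** A i))" by (simp only: trace_mul_sym[of "A i"])
    also have "\<dots> = trace (R ** A i)" unfolding R_def by (rule trace_sum_left[symmetric]) simp
    also have "\<dots> = trace (A i ** R)" by (rule trace_mul_sym)
    finally show ?thesis .
  qed
  have EAB: "E (\<lambda>x. qf (A i) x * qf (B i) x) = \<beta> i * trace (A i ** \<rho> i)" if "i<m" for i
    using key[OF conjunct1[OF AA[OF that]] conjunct2[OF AA[OF that]] that] .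
  have ent': "(\<Sum>i<m. \<beta> i * vn_entropy (\<rho> i)) \<ge> vn_entropy (\<Sum>i<m. \<beta> i *\<^sub>R \<rho> i) - \<epsilon>^2"
    using ent by (simp add: \<beta>_def)
  have core_app: "(\<Sum>i<m. \<beta> i * trace (A i ** (\<rho> i - R))) \<le> \<epsilon>"
    unfolding R_def by (rule core[OF AA bnn dens bsum ent' eps])
  have "(\<Sum>i<m. \<beta> i * trace (A i ** (\<rho> i - R))) = (\<Sum>i<m. E (\<lambda>x. qf (A i) x * qf (B i) x) - E (qf (A i)) * \<beta> i)"
    by (rule sum.cong) (simp_all add: EA EAB mm_diff_r trace_sub algebra_simps)
  also have "\<dots> = (\<Sum>i<m. E (\<lambda>x. qf (A i) x * qf (B i) x)) - (\<Sum>i<m. E (qf (A i)) * \<beta> i)"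
    by (rule sum_subtractf)
  finally show ?thesis using core_app by (simp add: \<beta>_def)
qed

lemma Ep_sum:
  assumes "finite (set_pmf p)"
  shows "measure_pmf.expectation p (f :: 'a \<Rightarrow> real) = (\<Sum>x\<in>set_pmf p. f x * pmf p x)"
  by (rule integral_measure_pmf_real[OF assms]) simp

lemma Ep_pseudo:
  fixes p :: "(real^'n) pmf"
  assumes fin: "finite (set_pmf p)"
  shows "pseudo_exp4 (measure_pmf.expectation p)"
  unfolding pseudo_exp4_def Ep_sum[OF fin]
  by (auto simp: sum.distrib algebra_simps sum_distrib_left sum_pmf_eq_1[OF fin] intro!: sum_nonneg)

lemma Ep_cons:
  fixes p :: "(real^'n) pmf"
  assumes fin: "finite (set_pmf p)" and un: "\<forall>x\<in>set_pmf p. norm x = 1"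
  shows "\<forall>Q. poly_fun 2 Q \<longrightarrow> measure_pmf.expectation p (\<lambda>x. ((norm x)^2 - 1) * Q x) = 0"
  unfolding Ep_sum[OF fin] using un by simp

lemma Ep_rho:
  fixes p :: "(real^'n) pmf" and B :: "real^'n^'n"
  assumes fin: "finite (set_pmf p)"
  shows "(1 / b) *\<^sub>R measure_pmf.expectation p (\<lambda>x. qf B x *\<^sub>R outer x) =
     (\<chi> j k. measure_pmf.expectation p (\<lambda>x. x $ j * x $ k * qf B x) / b)"
proof -
  have "measure_pmf.expectation p (\<lambda>x. qf B x *\<^sub>R outer x) = (\<Sum>a\<in>set_pmf p. pmf p a *\<^sub>R (qf B a *\<^sub>R outer a))"
    by (rule integral_measure_pmf[OF fin]) simp
  thus ?thesis
    by (simp add: vec_eq_iff Ep_sum[OF fin] sum_component outer_def sum_divide_distrib mult_ac)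
qed

theorem lemmaC2:
  fixes A B :: "nat \<Rightarrow> real^'n^'n" and m :: nat and \<epsilon> :: real
  assumes "\<epsilon> \<ge> 0"
    and "\<And>i. i < m \<Longrightarrow> psd (A i) \<and> below_id (A i)"
    and "\<And>i. i < m \<Longrightarrow> psd (B i)"
    and "\<And>x. (\<Sum>i<m. qf (B i) x) = (norm x)^2"
  shows
   "(\<forall>(p :: (real^'n) pmf) (\<rho> :: nat \<Rightarrow> real^'n^'n).
      finite (set_pmf p) \<and> (\<forall>x\<in>set_pmf p. norm x = 1) \<and>
      (\<forall>i<m. let \<beta> = measure_pmf.expectation p (qf (B i)) in
          (\<beta> > 0 \<longrightarrow> \<rho> i = (1 / \<beta>) *\<^sub>R measure_pmf.expectation p (\<lambda>x. qf (B i) x *\<^sub>R outer x)) \<and>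
          (\<beta> = 0 \<longrightarrow> density_matrix (\<rho> i))) \<and>
      (\<Sum>i<m. measure_pmf.expectation p (qf (B i)) * vn_entropy (\<rho> i))
        \<ge> vn_entropy (\<Sum>i<m. measure_pmf.expectation p (qf (B i)) *\<^sub>R \<rho> i) - \<epsilon>^2
      \<longrightarrow>
      (\<Sum>i<m. measure_pmf.expectation p (qf (A i)) * measure_pmf.expectation p (qf (B i)))
        \<ge> (\<Sum>i<m. measure_pmf.expectation p (\<lambda>x. qf (A i) x * qf (B i) x)) - \<epsilon>)
    \<and>
    (\<forall>(E :: (real^'n \<Rightarrow> real) \<Rightarrow> real) (\<rho> :: nat \<Rightarrow> real^'n^'n).
      pseudo_exp4 E \<and>
      (\<forall>Q. poly_fun 2 Q \<longrightarrow> E (\<lambda>x. ((norm x)^2 - 1) * Q x) = 0) \<and>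
      (\<forall>i<m. let \<beta> = E (qf (B i)) in
          (\<beta> > 0 \<longrightarrow> \<rho> i = (\<chi> j k. E (\<lambda>x. x $ j * x $ k * qf (B i) x) / \<beta>)) \<and>
          (\<beta> = 0 \<longrightarrow> density_matrix (\<rho> i))) \<and>
      (\<Sum>i<m. E (qf (B i)) * vn_entropy (\<rho> i))
        \<ge> vn_entropy (\<Sum>i<m. E (qf (B i)) *\<^sub>R \<rho> i) - \<epsilon>^2
      \<longrightarrow>
      (\<Sum>i<m. E (qf (A i)) * E (qf (B i)))
        \<ge> (\<Sum>i<m. E (\<lambda>x. qf (A i) x * qf (B i) x)) - \<epsilon>)"
proof (intro conjI allI impI)
  fix E :: "(real^'n \<Rightarrow> real) \<Rightarrow> real" and \<rho> :: "nat \<Rightarrow> real^'n^'n"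
  assume h: "pseudo_exp4 E \<and>
      (\<forall>Q. poly_fun 2 Q \<longrightarrow> E (\<lambda>x. ((norm x)^2 - 1) * Q x) = 0) \<and>
      (\<forall>i<m. let \<beta> = E (qf (B i)) in
          (\<beta> > 0 \<longrightarrow> \<rho> i = (\<chi> j k. E (\<lambda>x. x $ j * x $ k * qf (B i) x) / \<beta>)) \<and>
          (\<beta> = 0 \<longrightarrow> density_matrix (\<rho> i))) \<and>
      (\<Sum>i<m. E (qf (B i)) * vn_entropy (\<rho> i))
        \<ge> vn_entropy (\<Sum>i<m. E (qf (B i)) *\<^sub>R \<rho> i) - \<epsilon>^2"
  show "(\<Sum>i<m. E (qf (A i)) * E (qf (B i))) \<ge> (\<Sum>i<m. E (\<lambda>x. qf (A i) x * qf (B i) x)) - \<epsilon>"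
    using pseudo_main[where A=A and B=B and m=m and \<epsilon>=\<epsilon>, OF assms(1) assms(2) assms(3) assms(4)] h by blast
next
  fix p :: "(real^'n) pmf" and \<rho> :: "nat \<Rightarrow> real^'n^'n"
  assume h: "finite (set_pmf p) \<and> (\<forall>x\<in>set_pmf p. norm x = 1) \<and>
      (\<forall>i<m. let \<beta> = measure_pmf.expectation p (qf (B i)) in
          (\<beta> > 0 \<longrightarrow> \<rho> i = (1 / \<beta>) *\<^sub>R measure_pmf.expectation p (\<lambda>x. qf (B i) x *\<^sub>R outer x)) \<and>
          (\<beta> = 0 \<longrightarrow> density_matrix (\<rho> i))) \<and>
      (\<Sum>i<m. measure_pmf.expectation p (qf (B i)) * vn_entropy (\<rho> i))
        \<ge> vn_entropy (\<Sum>i<m. measure_pmf.expectation p (qf (B i)) *\<^sub>R \<rho> i) - \<epsilon>^2"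
  hence fin: "finite (set_pmf p)" and un: "\<forall>x\<in>set_pmf p. norm x = 1" by auto
  have rho: "\<forall>i<m. let \<beta> = measure_pmf.expectation p (qf (B i)) in
          (\<beta> > 0 \<longrightarrow> \<rho> i = (\<chi> j k. measure_pmf.expectation p (\<lambda>x. x $ j * x $ k * qf (B i) x) / \<beta>)) \<and>
          (\<beta> = 0 \<longrightarrow> density_matrix (\<rho> i))"
    using h by (simp add: Ep_rho[OF fin] Let_def)
  show "(\<Sum>i<m. measure_pmf.expectation p (qf (A i)) * measure_pmf.expectation p (qf (B i)))
        \<ge> (\<Sum>i<m. measure_pmf.expectation p (\<lambda>x. qf (A i) x * qf (B i) x)) - \<epsilon>"
    using pseudo_main[where A=A and B=B and m=m and \<epsilon>=\<epsilon>, OF assms(1) assms(2) assms(3) assms(4) Ep_pseudo[OF fin] Ep_cons[OF fin un] rho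
      h[THEN conjunct2, THEN conjunct2, THEN conjunct2]] by blast
qed

end
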